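(* Let $\mathcal{X},\mathcal{Y}$ be finite, $P_{\bar X}$ an $m$-type on $\mathcal{X}$ (for some positive integer $m$), $P_{Y|X}$ a channel, $P_{\bar XY}=P_{\bar X}P_{Y|X}$, and let $R>I(P_{\bar X},P_{Y|X})$. For a channel $Q_{Y|X}$ let $Q_Y=\sum_xP_{\bar X}(x)Q_{Y|X}(\cdot|x)$. Then \[ \min_{Q_{Y|X}}\Big\{D(P_{\bar X}Q_{Y|X}\|P_{\bar XY})+\tfrac12\big[R-D(P_{\bar X}Q_{Y|X}\|P_{\bar X}Q_Y)\big]_+\Big\}=\max_{\lambda\in[1,2]}\Big\{\frac{\lambda-1}{\lambda}\big(R-I^{\mathsf{c}}_\lambda(P_{\bar X},P_{Y|X})\big)\Big\}, \] where the minimum is over all channels from $\mathcal{X}$ to $\mathcal{Y}$ and $[f]_+=\max\{0,f\}$.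
   Context: An $m$-type is a distribution with all probabilities in $\{0,1/m,\dots,1\}$. $D$ is relative entropy, $I$ mutual information. Csiszár's $\alpha$-mutual information: $I^{\mathsf{c}}_\lambda(P_X,P_{Y|X})=\min_{S_Y}\sum_xP_X(x)D_\lambda(P_{Y|X}(\cdot|x)\|S_Y)$, with the minimum over distributions $S_Y$ on $\mathcal{Y}$ and $D_\lambda(P\|Q)=\frac1{\lambda-1}\log\sum_yP(y)^\lambda Q(y)^{1-\lambda}$ the Rényi divergence ($D_1$ = relative entropy). *)

theory Defs
  imports "HOL-Analysis.Analysis"
begin

text \<open>Distributions on a finite type are represented by their probability mass
  functions. Logarithms are natural logarithms.\<close>

definition is_dist :: "('a::finite \<Rightarrow> real) \<Rightarrow> bool" where
  "is_dist P \<longleftrightarrow> (\<forall>a. 0 \<le> P a) \<and> (\<Sum>a\<in>UNIV. P a) = 1"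

definition is_channel :: "('x::finite \<Rightarrow> 'y::finite \<Rightarrow> real) \<Rightarrow> bool" where
  "is_channel W \<longleftrightarrow> (\<forall>x. is_dist (W x))"

definition is_mtype :: "nat \<Rightarrow> ('a::finite \<Rightarrow> real) \<Rightarrow> bool" where
  "is_mtype m P \<longleftrightarrow> is_dist P \<and> (\<forall>a. \<exists>k::nat. k \<le> m \<and> P a = real k / real m)"

definition rel_ent :: "('a::finite \<Rightarrow> real) \<Rightarrow> ('a \<Rightarrow> real) \<Rightarrow> ereal" where
  "rel_ent P Q = (if \<forall>a. P a > 0 \<longrightarrow> Q a > 0
     then ereal (\<Sum>a | P a > 0. P a * ln (P a / Q a)) else \<infinity>)"

text \<open>Renyi divergence of order \<lambda> (\<lambda> > 0); D_1 is relative entropy.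
  Convention: terms with P(y) = 0 contribute 0.\<close>
definition renyi_div :: "real \<Rightarrow> ('a::finite \<Rightarrow> real) \<Rightarrow> ('a \<Rightarrow> real) \<Rightarrow> ereal" where
  "renyi_div l P Q = (if l = 1 then rel_ent P Q else
     (let s = (\<Sum>a | P a > 0. P a powr l * Q a powr (1 - l)) in
      if (l > 1 \<and> \<not> (\<forall>a. P a > 0 \<longrightarrow> Q a > 0)) \<or> s \<le> 0 then \<infinity>
      else ereal (1 / (l - 1) * ln s)))"

definition joint :: "('x::finite \<Rightarrow> real) \<Rightarrow> ('x \<Rightarrow> 'y::finite \<Rightarrow> real) \<Rightarrow> 'x \<times> 'y \<Rightarrow> real" where
  "joint P W = (\<lambda>(x, y). P x * W x y)"

definition out_dist :: "('x::finite \<Rightarrow> real) \<Rightarrow> ('x \<Rightarrow> 'y::finite \<Rightarrow> real) \<Rightarrow> 'y \<Rightarrow> real" where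
  "out_dist P W = (\<lambda>y. \<Sum>x\<in>UNIV. P x * W x y)"

definition prod_dist :: "('x::finite \<Rightarrow> real) \<Rightarrow> ('y::finite \<Rightarrow> real) \<Rightarrow> 'x \<times> 'y \<Rightarrow> real" where
  "prod_dist P Q = (\<lambda>(x, y). P x * Q y)"

definition mutual_info :: "('x::finite \<Rightarrow> real) \<Rightarrow> ('x \<Rightarrow> 'y::finite \<Rightarrow> real) \<Rightarrow> ereal" where
  "mutual_info P W = rel_ent (joint P W) (prod_dist P (out_dist P W))"

text \<open>Csiszar's alpha-mutual information (minimum over output distributions,
  rendered as an infimum).\<close>
definition csiszar_mi :: "real \<Rightarrow> ('x::finite \<Rightarrow> real) \<Rightarrow> ('x \<Rightarrow> 'y::finite \<Rightarrow> real) \<Rightarrow> ereal" where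
  "csiszar_mi l P W = (INF S \<in> {S. is_dist S}. \<Sum>x\<in>UNIV. ereal (P x) * renyi_div l (W x) S)"

end

theory Submission
  imports Defs
begin
definition phi :: "real \<Rightarrow> real" where "phi u = u * ln u"

lemma xlnx_ge: assumes "0 \<le> (a::real)" "0 < c" shows "a - c \<le> a * ln a - a * ln c"
proof (cases "a = 0")
  case True then show ?thesis using assms by simp
next
  case False
  hence a: "a > 0" using assms by simp
  have "ln (c/a) \<le> c/a - 1" using ln_le_minus_one a assms by simp
  hence "a * ln (c/a) \<le> a * (c/a - 1)" using a by (simp add: mult_left_mono)
  moreover have "ln (c/a) = ln c - ln a" using a assms by (simp add: ln_div)
  ultimately show ?thesis using a by (simp add: algebra_simps)
qed

lemma phi_convex:
  assumes "0 \<le> a" "0 \<le> b" "0 \<le> s" "s \<le> 1"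
  shows "phi ((1-s)*a + s*b) \<le> (1-s)*phi a + s*phi b"
proof -
  define c where "c = (1-s)*a + s*b"
  have c0: "c \<ge> 0" using assms unfolding c_def by simp
  show ?thesis
  proof (cases "c = 0")
    case True
    hence "(1-s)*a = 0" "s*b = 0" using assms c_def
      by (smt (verit) mult_nonneg_nonneg)+
    then show ?thesis using True unfolding phi_def c_def by (auto simp: mult.assoc[symmetric])
  next
    case False
    hence cp: "c > 0" using c0 by simp
    have 1: "(1-s)*(a - c) \<le> (1-s)*(a*ln a - a*ln c)"
      using xlnx_ge[OF assms(1) cp] assms by (simp add: mult_left_mono)
    have 2: "s*(b - c) \<le> s*(b*ln b - b*ln c)"
      using xlnx_ge[OF assms(2) cp] assms by (simp add: mult_left_mono)
    have "(1-s)*(a - c) + s*(b-c) = 0" unfolding c_def by (simp add: algebra_simps)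
    moreover have "(1-s)*(a*ln a - a*ln c) + s*(b*ln b - b*ln c) = (1-s)*phi a + s*phi b - phi c"
      unfolding phi_def c_def by (simp add: algebra_simps)
    ultimately show ?thesis using 1 2 unfolding c_def by linarith
  qed
qed

lemma phi_scale: assumes "0 < s" "0 \<le> a" shows "phi (s*a) = s*ln s*a + s*phi a"
proof (cases "a = 0")
  case True then show ?thesis by (simp add: phi_def)
next
  case False then show ?thesis using assms by (simp add: phi_def ln_mult algebra_simps)
qed

lemma phi_lim0: "(phi \<longlongrightarrow> 0) (at_right 0)"
proof -
  have "((\<lambda>x::real. - (ln x / x)) \<longlongrightarrow> 0) at_top"
    using tendsto_minus[OF ln_x_over_x_tendsto_0] by simp
  moreover have "\<forall>\<^sub>F x in at_top. - (ln x / x) = phi (inverse x)"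
    using eventually_gt_at_top[of "0::real"]
    by eventually_elim (simp add: phi_def ln_inverse divide_inverse)
  ultimately have "((\<lambda>x. phi (inverse x)) \<longlongrightarrow> 0) at_top"
    using tendsto_cong by fastforce
  thus ?thesis unfolding filterlim_at_right_to_top .
qed

lemma phi_cont: "continuous_on {0..1} phi"
proof (rule continuous_on_IccI)
  show "(phi \<longlongrightarrow> phi 0) (at_right 0)" using phi_lim0 by (simp add: phi_def)
  have "isCont phi 1" unfolding phi_def by (intro continuous_intros) auto
  thus "(phi \<longlongrightarrow> phi 1) (at_left 1)"
    by (simp add: isCont_def filterlim_at_split)
  fix x :: real assume "0 < x" "x < 1"
  hence "isCont phi x" unfolding phi_def by (intro continuous_intros) auto
  thus "phi \<midarrow>x\<rightarrow> phi x" by (simp add: isCont_def)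
qed simp

definition CD :: "('x::finite \<Rightarrow> real) \<Rightarrow> ('x \<Rightarrow> 'y::finite \<Rightarrow> real) \<Rightarrow> ('x \<Rightarrow> 'y \<Rightarrow> real) \<Rightarrow> real" where
  "CD P Q V = (\<Sum>x\<in>UNIV. P x * (\<Sum>y\<in>UNIV. Q x y * ln (Q x y / V x y)))"

definition MI :: "('x::finite \<Rightarrow> real) \<Rightarrow> ('x \<Rightarrow> 'y::finite \<Rightarrow> real) \<Rightarrow> real" where
  "MI P Q = CD P Q (\<lambda>x. out_dist P Q)"

definition Kset :: "('x::finite \<Rightarrow> real) \<Rightarrow> ('x \<Rightarrow> 'y::finite \<Rightarrow> real) \<Rightarrow> ('x \<Rightarrow> 'y \<Rightarrow> real) set" where
  "Kset P W = {Q. is_channel Q \<and> (\<forall>x y. 0 < P x \<longrightarrow> W x y = 0 \<longrightarrow> Q x y = 0)}"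

lemma dist_nonneg: "is_dist P \<Longrightarrow> 0 \<le> P a" by (simp add: is_dist_def)
lemma dist_sum: "is_dist P \<Longrightarrow> (\<Sum>a\<in>UNIV. P a) = 1" by (simp add: is_dist_def)
lemma chan_nonneg: "is_channel Q \<Longrightarrow> 0 \<le> Q x y" by (simp add: is_channel_def is_dist_def)
lemma chan_sum: "is_channel Q \<Longrightarrow> (\<Sum>y\<in>UNIV. Q x y) = 1" by (simp add: is_channel_def is_dist_def)

lemma rel_ent_joint:
  fixes P :: "'x::finite \<Rightarrow> real" and Q V :: "'x \<Rightarrow> 'y::finite \<Rightarrow> real"
  assumes P: "is_dist P" and Q: "is_channel Q"
    and sup: "\<And>x y. 0 < P x \<Longrightarrow> 0 < Q x y \<Longrightarrow> 0 < V x y"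
  shows "rel_ent (joint P Q) (joint P V) = ereal (CD P Q V)"
proof -
  have pos: "0 < P x \<and> 0 < Q x y" if "0 < P x * Q x y" for x y
    using that dist_nonneg[OF P, of x] chan_nonneg[OF Q, of x y]
    by (metis less_eq_real_def mult_eq_0_iff)
  have cond: "\<forall>a. joint P Q a > 0 \<longrightarrow> joint P V a > 0"
  proof (intro allI impI)
    fix a assume "joint P Q a > 0"
    then obtain x y where a: "a = (x,y)" and xy: "0 < P x * Q x y" by (cases a) (simp add: joint_def)
    have "0 < P x" "0 < Q x y" using pos[OF xy] by auto
    hence "0 < P x * V x y" using sup by simp
    thus "joint P V a > 0" using a by (simp add: joint_def)
  qed
  have "(\<Sum>a | joint P Q a > 0. joint P Q a * ln (joint P Q a / joint P V a))
      = (\<Sum>a\<in>UNIV. joint P Q a * ln (joint P Q a / joint P V a))"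
  proof (rule sum.mono_neutral_left)
    show "\<forall>i\<in>UNIV - {a. 0 < joint P Q a}. joint P Q i * ln (joint P Q i / joint P V i) = 0"
    proof
      fix i assume "i \<in> UNIV - {a. 0 < joint P Q a}"
      moreover have "joint P Q i \<ge> 0" using dist_nonneg[OF P] chan_nonneg[OF Q]
        by (cases i) (simp add: joint_def)
      ultimately show "joint P Q i * ln (joint P Q i / joint P V i) = 0" by simp
    qed
  qed auto
  also have "\<dots> = (\<Sum>(x,y)\<in>UNIV \<times> UNIV. joint P Q (x,y) * ln (joint P Q (x,y) / joint P V (x,y)))"
    by (rule sum.cong) (auto simp: UNIV_Times_UNIV)
  also have "\<dots> = (\<Sum>x\<in>UNIV. \<Sum>y\<in>UNIV. joint P Q (x,y) * ln (joint P Q (x,y) / joint P V (x,y)))"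
    by (rule sum.cartesian_product[symmetric])
  also have "\<dots> = CD P Q V"
    unfolding CD_def
  proof (rule sum.cong[OF refl])
    fix x
    show "(\<Sum>y\<in>UNIV. joint P Q (x, y) * ln (joint P Q (x, y) / joint P V (x, y))) =
          P x * (\<Sum>y\<in>UNIV. Q x y * ln (Q x y / V x y))"
    proof (cases "P x = 0")
      case True then show ?thesis by (simp add: joint_def)
    next
      case False
      show ?thesis unfolding sum_distrib_left
        by (rule sum.cong[OF refl]) (use False in \<open>simp add: joint_def\<close>)
    qed
  qed
  finally have e: "(\<Sum>a | joint P Q a > 0. joint P Q a * ln (joint P Q a / joint P V a)) = CD P Q V" .
  show ?thesis unfolding rel_ent_def if_P[OF cond] e ..
qed


lemma rel_ent_prod:
  fixes P :: "'x::finite \<Rightarrow> real" and Q :: "'x \<Rightarrow> 'y::finite \<Rightarrow> real" and S :: "'y \<Rightarrow> real"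
  assumes P: "is_dist P" and Q: "is_channel Q"
    and sup: "\<And>x y. 0 < P x \<Longrightarrow> 0 < Q x y \<Longrightarrow> 0 < S y"
  shows "rel_ent (joint P Q) (prod_dist P S) = ereal (CD P Q (\<lambda>x. S))"
proof -
  have "prod_dist P S = joint P (\<lambda>x. S)" by (simp add: prod_dist_def joint_def)
  thus ?thesis using rel_ent_joint[OF P Q, of "\<lambda>x. S"] sup by simp
qed

lemma rel_ent_inf:
  fixes P :: "'x::finite \<Rightarrow> real" and Q V :: "'x \<Rightarrow> 'y::finite \<Rightarrow> real"
  assumes "0 < P x" "0 < Q x y" "V x y = 0"
  shows "rel_ent (joint P Q) (joint P V) = \<infinity>"
proof -
  have "joint P Q (x,y) > 0" "\<not> joint P V (x,y) > 0" using assms by (auto simp: joint_def)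
  thus ?thesis unfolding rel_ent_def by auto
qed

lemma out_pos:
  assumes P: "is_dist P" and Q: "is_channel Q" and "0 < P x" "0 < Q x y"
  shows "0 < out_dist P Q y"
proof -
  have "P x * Q x y \<le> (\<Sum>x'\<in>UNIV. P x' * Q x' y)"
    by (rule member_le_sum) (auto intro: mult_nonneg_nonneg dist_nonneg[OF P] chan_nonneg[OF Q])
  moreover have "0 < P x * Q x y" using assms by simp
  ultimately show ?thesis by (simp add: out_dist_def)
qed

lemma out_nonneg: assumes P: "is_dist P" and Q: "is_channel Q" shows "0 \<le> out_dist P Q y"
  unfolding out_dist_def using dist_nonneg[OF P] chan_nonneg[OF Q] by (auto intro!: sum_nonneg)

lemma out_dist_is_dist: assumes P: "is_dist P" and Q: "is_channel Q" shows "is_dist (out_dist P Q)"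
proof -
  have "(\<Sum>y\<in>UNIV. out_dist P Q y) = (\<Sum>x\<in>UNIV. P x * (\<Sum>y\<in>UNIV. Q x y))"
    unfolding out_dist_def sum_distrib_left by (rule sum.swap)
  also have "\<dots> = 1" using chan_sum[OF Q] dist_sum[OF P] by simp
  finally show ?thesis using out_nonneg[OF P Q] by (simp add: is_dist_def)
qed

lemma out_le1: assumes P: "is_dist P" and Q: "is_channel Q" shows "out_dist P Q y \<le> 1"
proof -
  have "out_dist P Q y \<le> (\<Sum>y\<in>UNIV. out_dist P Q y)"
    by (rule member_le_sum) (auto intro: out_nonneg[OF P Q])
  thus ?thesis using out_dist_is_dist[OF P Q] by (simp add: is_dist_def)
qed

lemma chan_le1: assumes Q: "is_channel Q" shows "Q x y \<le> 1"
proof -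
  have "Q x y \<le> (\<Sum>y\<in>UNIV. Q x y)"
    by (rule member_le_sum) (auto intro: chan_nonneg[OF Q])
  thus ?thesis using chan_sum[OF Q] by simp
qed

lemma log_sum:
  fixes q u :: "'y::finite \<Rightarrow> real"
  assumes q0: "\<And>y. 0 \<le> q y" and q1: "(\<Sum>y\<in>UNIV. q y) = 1"
    and u0: "\<And>y. 0 \<le> u y" and qu: "\<And>y. 0 < q y \<Longrightarrow> 0 < u y"
    and U: "0 < U" "(\<Sum>y\<in>UNIV. u y) \<le> U"
  shows "(\<Sum>y\<in>UNIV. q y * ln (u y / q y)) \<le> ln U"
proof -
  have t: "q y * ln (u y / q y) \<le> u y / U - q y + q y * ln U" for y
  proof (cases "q y = 0")
    case True then show ?thesis using u0[of y] U by simp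
  next
    case False
    hence qp: "q y > 0" using q0[of y] by simp
    have up: "u y > 0" using qu[OF qp] .
    have "ln (u y / (q y * U)) \<le> u y / (q y * U) - 1"
      using ln_le_minus_one qp up U by simp
    hence "q y * ln (u y / (q y * U)) \<le> q y * (u y / (q y * U) - 1)"
      using qp by (simp add: mult_left_mono)
    moreover have e1: "ln (u y / (q y * U)) = ln (u y / q y) - ln U"
      using qp up U by (simp add: ln_div ln_mult)
    have "q y * ln (u y / (q y * U)) = q y * ln (u y / q y) - q y * ln U"
      unfolding e1 by (rule right_diff_distrib)
    moreover have "q y * (u y / (q y * U) - 1) = u y / U - q y" using qp U
      by (simp add: field_simps)
    ultimately show ?thesis by linarith
  qed
  have "(\<Sum>y\<in>UNIV. q y * ln (u y / q y)) \<le> (\<Sum>y\<in>UNIV. u y / U - q y + q y * ln U)"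
    by (rule sum_mono) (rule t)
  also have "\<dots> = (\<Sum>y\<in>UNIV. u y) / U - 1 + ln U"
    by (simp add: sum.distrib sum_subtractf sum_divide_distrib[symmetric] sum_distrib_right[symmetric] q1)
  also have "\<dots> \<le> ln U" using U by simp
  finally show ?thesis .
qed

lemma gibbs:
  fixes q r :: "'y::finite \<Rightarrow> real"
  assumes "is_dist q" "is_dist r" "\<And>y. 0 < q y \<Longrightarrow> 0 < r y"
  shows "0 \<le> (\<Sum>y\<in>UNIV. q y * ln (q y / r y))"
proof -
  have "(\<Sum>y\<in>UNIV. q y * ln (r y / q y)) \<le> ln 1"
    by (rule log_sum) (use assms in \<open>auto simp: is_dist_def\<close>)
  moreover have "q y * ln (q y / r y) = - (q y * ln (r y / q y))" for y
  proof (cases "q y = 0")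
    case False
    hence "0 < q y" "0 < r y" using assms by (auto simp: is_dist_def less_le)
    thus ?thesis by (simp add: ln_div algebra_simps)
  qed simp
  ultimately show ?thesis by (simp add: sum_negf)
qed

definition Zf :: "('x \<Rightarrow> 'y::finite \<Rightarrow> real) \<Rightarrow> ('y \<Rightarrow> real) \<Rightarrow> real \<Rightarrow> 'x \<Rightarrow> real" where
  "Zf W S l x = (\<Sum>y\<in>UNIV. W x y powr l * S y powr (1 - l))"

definition Fr :: "('x::finite \<Rightarrow> real) \<Rightarrow> ('x \<Rightarrow> 'y::finite \<Rightarrow> real) \<Rightarrow> ('y \<Rightarrow> real) \<Rightarrow> real \<Rightarrow> real" where
  "Fr P W S l = (\<Sum>x\<in>UNIV. P x * (1 / (l - 1) * ln (Zf W S l x)))"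

definition mix :: "real \<Rightarrow> ('x \<Rightarrow> 'y \<Rightarrow> real) \<Rightarrow> ('x \<Rightarrow> 'y \<Rightarrow> real) \<Rightarrow> 'x \<Rightarrow> 'y \<Rightarrow> real" where
  "mix s Q1 Q2 = (\<lambda>x y. (1 - s) * Q1 x y + s * Q2 x y)"

lemma CD_phi:
  fixes P :: "'x::finite \<Rightarrow> real" and Q V :: "'x \<Rightarrow> 'y::finite \<Rightarrow> real"
  assumes "\<And>x y. 0 < P x \<Longrightarrow> 0 < Q x y \<Longrightarrow> 0 < V x y"
    and Q0: "\<And>x y. 0 \<le> Q x y" and P0: "\<And>x. 0 \<le> P x"
  shows "CD P Q V = (\<Sum>x\<in>UNIV. P x * (\<Sum>y\<in>UNIV. phi (Q x y) - Q x y * ln (V x y)))"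
  unfolding CD_def
proof (rule sum.cong[OF refl])
  fix x
  show "P x * (\<Sum>y\<in>UNIV. Q x y * ln (Q x y / V x y)) =
        P x * (\<Sum>y\<in>UNIV. phi (Q x y) - Q x y * ln (V x y))"
  proof (cases "0 < P x")
    case True
    have "Q x y * ln (Q x y / V x y) = phi (Q x y) - Q x y * ln (V x y)" for y
    proof (cases "Q x y = 0")
      case False
      hence "0 < Q x y" using Q0[of x y] by simp
      with assms(1)[OF True this] show ?thesis by (simp add: phi_def ln_div algebra_simps)
    qed (simp add: phi_def)
    then show ?thesis by simp
  next
    case False
    hence "P x = 0" using P0[of x] by simp
    then show ?thesis by simp
  qed
qed

context
  fixes P :: "'x::finite \<Rightarrow> real" and W :: "'x \<Rightarrow> 'y::finite \<Rightarrow> real"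
  assumes P: "is_dist P" and Wc: "is_channel W"
begin

lemma P0: "0 \<le> P x" using dist_nonneg[OF P] .

lemma K_chan: "Q \<in> Kset P W \<Longrightarrow> is_channel Q" by (simp add: Kset_def)

lemma K_supp: "Q \<in> Kset P W \<Longrightarrow> 0 < P x \<Longrightarrow> 0 < Q x y \<Longrightarrow> 0 < W x y"
  using chan_nonneg[OF Wc, of x y] by (auto simp: Kset_def less_le)

lemma W_K: "W \<in> Kset P W" using Wc by (simp add: Kset_def)

lemma CD_WW: "CD P W W = 0"
proof -
  have h: "W x y * ln (W x y / W x y) = 0" for x y by (cases "W x y = 0") auto
  show ?thesis unfolding CD_def h by simp
qed

lemma mix_K:
  assumes "Q1 \<in> Kset P W" "Q2 \<in> Kset P W" "0 \<le> s" "s \<le> 1"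
  shows "mix s Q1 Q2 \<in> Kset P W"
proof -
  have c1: "is_channel Q1" and c2: "is_channel Q2" using assms by (auto simp: Kset_def)
  have "is_dist (mix s Q1 Q2 x)" for x
    using chan_nonneg[OF c1, of x] chan_nonneg[OF c2, of x] chan_sum[OF c1, of x] chan_sum[OF c2, of x] assms(3,4)
    by (auto simp: is_dist_def mix_def sum.distrib sum_distrib_left[symmetric])
  thus ?thesis using assms by (auto simp: Kset_def is_channel_def mix_def)
qed

lemma out_mix: "out_dist P (mix s Q1 Q2) y = (1 - s) * out_dist P Q1 y + s * out_dist P Q2 y"
  unfolding out_dist_def mix_def sum_distrib_left sum.distrib[symmetric]
  by (rule sum.cong) (auto simp: algebra_simps)

lemma CDW_phi: "Q \<in> Kset P W \<Longrightarrow>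
   CD P Q W = (\<Sum>x\<in>UNIV. P x * (\<Sum>y\<in>UNIV. phi (Q x y) - Q x y * ln (W x y)))"
  by (rule CD_phi) (auto intro: K_supp chan_nonneg K_chan P0)

lemma CDS_phi: "Q \<in> Kset P W \<Longrightarrow> (\<And>x y. 0 < P x \<Longrightarrow> 0 < W x y \<Longrightarrow> 0 < S y) \<Longrightarrow>
   CD P Q (\<lambda>x. S) = (\<Sum>x\<in>UNIV. P x * (\<Sum>y\<in>UNIV. phi (Q x y) - Q x y * ln (S y)))"
  by (rule CD_phi) (auto intro: K_supp chan_nonneg K_chan P0)

lemma MI_phi:
  assumes Q: "is_channel Q"
  shows "MI P Q = (\<Sum>x\<in>UNIV. P x * (\<Sum>y\<in>UNIV. phi (Q x y))) - (\<Sum>y\<in>UNIV. phi (out_dist P Q y))"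
proof -
  have "MI P Q = (\<Sum>x\<in>UNIV. P x * (\<Sum>y\<in>UNIV. phi (Q x y) - Q x y * ln (out_dist P Q y)))"
    unfolding MI_def by (rule CD_phi) (auto intro: out_pos[OF P Q] chan_nonneg[OF Q] P0)
  also have "\<dots> = (\<Sum>x\<in>UNIV. P x * (\<Sum>y\<in>UNIV. phi (Q x y))) - (\<Sum>x\<in>UNIV. \<Sum>y\<in>UNIV. P x * Q x y * ln (out_dist P Q y))"
    by (simp add: sum_subtractf right_diff_distrib sum_distrib_left mult.assoc)
  also have "(\<Sum>x\<in>UNIV. \<Sum>y\<in>UNIV. P x * Q x y * ln (out_dist P Q y)) = (\<Sum>y\<in>UNIV. phi (out_dist P Q y))"
    by (subst sum.swap) (simp add: phi_def out_dist_def sum_distrib_right)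
  finally show ?thesis .
qed

end

definition tilt :: "('x::finite \<Rightarrow> real) \<Rightarrow> ('x \<Rightarrow> 'y::finite \<Rightarrow> real) \<Rightarrow> ('y \<Rightarrow> real) \<Rightarrow> real \<Rightarrow> 'x \<Rightarrow> 'y \<Rightarrow> real" where
  "tilt P W S l = (\<lambda>x y. if 0 < P x then W x y powr l * S y powr (1 - l) / Zf W S l x else W x y)"

lemma sum_lin_comb:
  fixes a b d :: "'a \<Rightarrow> real" and c k :: real
  assumes "\<And>y. a y - c * b y = k * d y"
  shows "(\<Sum>y\<in>A. a y) - c * (\<Sum>y\<in>A. b y) = k * (\<Sum>y\<in>A. d y)"
proof -
  have "(\<Sum>y\<in>A. a y) - c * (\<Sum>y\<in>A. b y) = (\<Sum>y\<in>A. a y - c * b y)"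
    by (simp add: sum_subtractf sum_distrib_left)
  also have "\<dots> = (\<Sum>y\<in>A. k * d y)" by (rule sum.cong[OF refl]) (rule assms)
  also have "\<dots> = k * (\<Sum>y\<in>A. d y)" by (simp only: sum_distrib_left)
  finally show ?thesis .
qed

context
  fixes P :: "'x::finite \<Rightarrow> real" and W :: "'x \<Rightarrow> 'y::finite \<Rightarrow> real"
  assumes P: "is_dist P" and Wc: "is_channel W"
begin

lemma out_pos_ex:
  assumes Q: "is_channel Q" and "0 < out_dist P Q y"
  shows "\<exists>x. 0 < P x \<and> 0 < Q x y"
proof (rule ccontr)
  assume "\<not> ?thesis"
  hence h: "P x * Q x y = 0" for x using dist_nonneg[OF P, of x] chan_nonneg[OF Q, of x y]
    by (metis less_eq_real_def mult_eq_0_iff)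
  have "out_dist P Q y = 0" by (simp add: out_dist_def h)
  thus False using assms by simp
qed

lemma sum_swap_out: "(\<Sum>x\<in>UNIV. P x * (\<Sum>y\<in>UNIV. Q x y * g y)) = (\<Sum>y\<in>UNIV. out_dist P Q y * g y)"
  unfolding out_dist_def sum_distrib_left sum_distrib_right
  by (subst sum.swap) (simp add: mult.assoc)

lemma golden:
  assumes Q: "Q \<in> Kset P W" and S: "is_dist S"
    and Sp: "\<And>x y. 0 < P x \<Longrightarrow> 0 < W x y \<Longrightarrow> 0 < S y"
  shows "MI P Q \<le> CD P Q (\<lambda>x. S)"
proof -
  have Qc: "is_channel Q" using Q by (simp add: Kset_def)
  have "CD P Q (\<lambda>x. S) = (\<Sum>x\<in>UNIV. P x * (\<Sum>y\<in>UNIV. phi (Q x y))) - (\<Sum>x\<in>UNIV. P x * (\<Sum>y\<in>UNIV. Q x y * ln (S y)))"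
    using CDS_phi[OF P Wc Q Sp] by (simp add: sum_subtractf right_diff_distrib)
  also have "(\<Sum>x\<in>UNIV. P x * (\<Sum>y\<in>UNIV. Q x y * ln (S y))) = (\<Sum>y\<in>UNIV. out_dist P Q y * ln (S y))"
    by (rule sum_swap_out)
  finally have e: "CD P Q (\<lambda>x. S) - MI P Q = (\<Sum>y\<in>UNIV. phi (out_dist P Q y) - out_dist P Q y * ln (S y))"
    using MI_phi[OF P Wc Qc] by (simp add: sum_subtractf)
  have OS: "0 < S y" if h: "0 < out_dist P Q y" for y
  proof -
    obtain x where "0 < P x" "0 < Q x y" using out_pos_ex[OF Qc h] by blast
    thus ?thesis using K_supp[OF P Wc Q] Sp by blast
  qed
  have "phi (out_dist P Q y) - out_dist P Q y * ln (S y) = out_dist P Q y * ln (out_dist P Q y / S y)" for y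
  proof (cases "out_dist P Q y = 0")
    case False
    hence "0 < out_dist P Q y" using out_nonneg[OF P Qc, of y] by simp
    with OS[OF this] show ?thesis by (simp add: phi_def ln_div algebra_simps)
  qed (simp add: phi_def)
  hence "CD P Q (\<lambda>x. S) - MI P Q = (\<Sum>y\<in>UNIV. out_dist P Q y * ln (out_dist P Q y / S y))"
    using e by simp
  moreover have "0 \<le> (\<Sum>y\<in>UNIV. out_dist P Q y * ln (out_dist P Q y / S y))"
    by (rule gibbs[OF out_dist_is_dist[OF P Qc] S OS])
  ultimately show ?thesis by simp
qed

lemma tilt_identity:
  fixes l Qv Wv Sv :: real
  assumes "0 < l" "0 \<le> Qv" "Qv > 0 \<Longrightarrow> 0 < Wv \<and> 0 < Sv"
  shows "Qv * ln (Qv / Wv) - ((l-1)/l) * (Qv * ln (Qv / Sv))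
       = - (1/l) * (Qv * ln ((Wv powr l * Sv powr (1 - l)) / Qv))"
proof (cases "Qv = 0")
  case False
  have q: "0 < Qv" using False assms(2) by simp
  hence w: "0 < Wv" and s: "0 < Sv" using assms by auto
  have "ln ((Wv powr l * Sv powr (1 - l)) / Qv) = l * ln Wv + (1 - l) * ln Sv - ln Qv"
    using q w s by (simp add: ln_div ln_mult)
  moreover have "ln (Qv / Wv) = ln Qv - ln Wv" "ln (Qv / Sv) = ln Qv - ln Sv"
    using q w s by (simp_all add: ln_div)
  ultimately have e: "ln ((Wv powr l * Sv powr (1 - l)) / Qv) = l * ln Wv + (1 - l) * ln Sv - ln Qv"
     "ln (Qv / Wv) = ln Qv - ln Wv" "ln (Qv / Sv) = ln Qv - ln Sv" by auto
  have "Qv * ln (Qv / Wv) - ((l-1)/l) * (Qv * ln (Qv / Sv)) - (- (1/l) * (Qv * ln ((Wv powr l * Sv powr (1 - l)) / Qv)))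
     = Qv * ((ln Qv - ln Wv) - ((l-1)/l) * (ln Qv - ln Sv) + (1/l) * (l * ln Wv + (1 - l) * ln Sv - ln Qv))"
    unfolding e using assms(1) by (simp add: field_simps)
  also have "\<dots> = 0" using assms(1) by (simp add: field_simps)
  finally show ?thesis by simp
qed simp

lemma Zf_pos:
  assumes S0: "\<And>y. 0 \<le> S y" and Sp: "\<And>x y. 0 < P x \<Longrightarrow> 0 < W x y \<Longrightarrow> 0 < S y" and "0 < P x"
  shows "0 < Zf W S l x"
proof -
  have "\<exists>y. 0 < W x y"
  proof (rule ccontr)
    assume "\<not> (\<exists>y. 0 < W x y)"
    hence h: "W x y = 0" for y using chan_nonneg[OF Wc, of x y] by (simp add: less_le)
    have "(\<Sum>y\<in>UNIV. W x y) = 0" by (simp add: h)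
    thus False using chan_sum[OF Wc, of x] by simp
  qed
  then obtain y where wy: "0 < W x y" by blast
  have sy: "0 < S y" using Sp[OF assms(3) wy] .
  have "W x y powr l * S y powr (1 - l) \<le> Zf W S l x"
    unfolding Zf_def by (rule member_le_sum) (auto intro: mult_nonneg_nonneg)
  moreover have "0 < W x y powr l * S y powr (1 - l)" using wy sy by simp
  ultimately show ?thesis by simp
qed

lemma var_x:
  assumes Q: "Q \<in> Kset P W" and S0: "\<And>y. 0 \<le> S y"
    and Sp: "\<And>x y. 0 < P x \<Longrightarrow> 0 < W x y \<Longrightarrow> 0 < S y"
    and l: "1 < l" and x: "0 < P x"
  shows "- (1/l) * ln (Zf W S l x) \<le>
     (\<Sum>y\<in>UNIV. Q x y * ln (Q x y / W x y)) - ((l-1)/l) * (\<Sum>y\<in>UNIV. Q x y * ln (Q x y / S y))"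
proof -
  have Qc: "is_channel Q" using Q by (simp add: Kset_def)
  define u where "u y = W x y powr l * S y powr (1 - l)" for y
  have e: "(\<Sum>y\<in>UNIV. Q x y * ln (Q x y / W x y)) - ((l-1)/l) * (\<Sum>y\<in>UNIV. Q x y * ln (Q x y / S y))
      = - (1/l) * (\<Sum>y\<in>UNIV. Q x y * ln (u y / Q x y))"
  proof -
    have "Q x y * ln (Q x y / W x y) - ((l-1)/l) * (Q x y * ln (Q x y / S y))
       = - (1/l) * (Q x y * ln (u y / Q x y))" for y
      unfolding u_def
      by (rule tilt_identity) (use l chan_nonneg[OF Qc] K_supp[OF P Wc Q x] Sp[OF x] in auto)
    thus ?thesis by (rule sum_lin_comb)
  qed
  have "(\<Sum>y\<in>UNIV. Q x y * ln (u y / Q x y)) \<le> ln (Zf W S l x)"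
  proof (rule log_sum)
    show "0 \<le> Q x y" for y using chan_nonneg[OF Qc] .
    show "(\<Sum>y\<in>UNIV. Q x y) = 1" using chan_sum[OF Qc] .
    show "0 \<le> u y" for y unfolding u_def by simp
    show "0 < u y" if "0 < Q x y" for y
    proof -
      have w: "0 < W x y" using K_supp[OF P Wc Q x that] .
      moreover have "0 < S y" using Sp[OF x w] .
      ultimately show ?thesis unfolding u_def by (intro mult_pos_pos) auto
    qed
    show "0 < Zf W S l x" by (rule Zf_pos[OF S0 Sp x])
    show "(\<Sum>y\<in>UNIV. u y) \<le> Zf W S l x" by (simp add: u_def Zf_def)
  qed
  hence "(1/l) * (\<Sum>y\<in>UNIV. Q x y * ln (u y / Q x y)) \<le> (1/l) * ln (Zf W S l x)"
    by (rule mult_left_mono) (use l in simp)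
  hence "- (1/l) * ln (Zf W S l x) \<le> - (1/l) * (\<Sum>y\<in>UNIV. Q x y * ln (u y / Q x y))"
    by simp
  thus ?thesis using e by simp
qed

lemma tilt_K:
  assumes S0: "\<And>y. 0 \<le> S y" and Sp: "\<And>x y. 0 < P x \<Longrightarrow> 0 < W x y \<Longrightarrow> 0 < S y"
  shows "tilt P W S l \<in> Kset P W"
proof -
  have "is_dist (tilt P W S l x)" for x
  proof (cases "0 < P x")
    case True
    have Z: "0 < Zf W S l x" by (rule Zf_pos[OF S0 Sp True])
    have "(\<Sum>y\<in>UNIV. W x y powr l * S y powr (1 - l) / Zf W S l x) = 1"
      using Z by (simp add: sum_divide_distrib[symmetric] Zf_def)
    thus ?thesis using True Z by (simp add: is_dist_def tilt_def)
  next
    case False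
    thus ?thesis using Wc by (simp add: is_channel_def tilt_def)
  qed
  thus ?thesis by (simp add: Kset_def is_channel_def tilt_def)
qed

lemma tilt_x:
  assumes S0: "\<And>y. 0 \<le> S y"
    and Sp: "\<And>x y. 0 < P x \<Longrightarrow> 0 < W x y \<Longrightarrow> 0 < S y"
    and l: "1 < l" and x: "0 < P x"
  shows "(\<Sum>y\<in>UNIV. tilt P W S l x y * ln (tilt P W S l x y / W x y))
     - ((l-1)/l) * (\<Sum>y\<in>UNIV. tilt P W S l x y * ln (tilt P W S l x y / S y)) = - (1/l) * ln (Zf W S l x)"
proof -
  let ?T = "tilt P W S l"
  have TK: "?T \<in> Kset P W" by (rule tilt_K[OF S0 Sp])
  have Tc: "is_channel ?T" using TK by (simp add: Kset_def)
  define u where "u y = W x y powr l * S y powr (1 - l)" for y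
  have Z: "0 < Zf W S l x" by (rule Zf_pos[OF S0 Sp x])
  have "?T x y * ln (?T x y / W x y) - ((l-1)/l) * (?T x y * ln (?T x y / S y))
       = - (1/l) * (?T x y * ln (u y / ?T x y))" for y
    unfolding u_def
    by (rule tilt_identity) (use l chan_nonneg[OF Tc] K_supp[OF P Wc TK x] Sp[OF x] in auto)
  hence e: "(\<Sum>y\<in>UNIV. ?T x y * ln (?T x y / W x y)) - ((l-1)/l) * (\<Sum>y\<in>UNIV. ?T x y * ln (?T x y / S y))
      = - (1/l) * (\<Sum>y\<in>UNIV. ?T x y * ln (u y / ?T x y))"
    by (rule sum_lin_comb)
  have h: "?T x y * ln (u y / ?T x y) = ?T x y * ln (Zf W S l x)" for y
  proof (cases "u y = 0")
    case True thus ?thesis by (simp add: tilt_def x u_def)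
  next
    case False
    hence "0 < u y" unfolding u_def using S0 by (simp add: less_le)
    thus ?thesis using Z x by (simp add: tilt_def u_def)
  qed
  have "(\<Sum>y\<in>UNIV. ?T x y * ln (u y / ?T x y)) = (\<Sum>y\<in>UNIV. ?T x y * ln (Zf W S l x))"
    by (rule sum.cong[OF refl]) (rule h)
  also have "\<dots> = ln (Zf W S l x)"
    using chan_sum[OF Tc, of x] by (simp add: sum_distrib_right[symmetric])
  finally have "(\<Sum>y\<in>UNIV. ?T x y * ln (u y / ?T x y)) = ln (Zf W S l x)" .
  thus ?thesis using e by simp
qed

lemma CD_split: "CD P Q W - r * CD P Q (\<lambda>x. S) =
   (\<Sum>x\<in>UNIV. P x * ((\<Sum>y\<in>UNIV. Q x y * ln (Q x y / W x y)) - r * (\<Sum>y\<in>UNIV. Q x y * ln (Q x y / S y))))"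
  unfolding CD_def by (simp add: sum_subtractf sum_distrib_left right_diff_distrib algebra_simps)

lemma Fr_split: "1 < l \<Longrightarrow> - ((l-1)/l) * Fr P W S l = (\<Sum>x\<in>UNIV. P x * (- (1/l) * ln (Zf W S l x)))"
  unfolding Fr_def sum_distrib_left by (rule sum.cong) (auto simp: field_simps)

lemma Phi_ge:
  assumes Q: "Q \<in> Kset P W" and S0: "\<And>y. 0 \<le> S y"
    and Sp: "\<And>x y. 0 < P x \<Longrightarrow> 0 < W x y \<Longrightarrow> 0 < S y" and l: "1 < l"
  shows "- ((l-1)/l) * Fr P W S l \<le> CD P Q W - ((l-1)/l) * CD P Q (\<lambda>x. S)"
  unfolding CD_split Fr_split[OF l]
proof (rule sum_mono)
  fix x
  show "P x * (- (1/l) * ln (Zf W S l x)) \<le> P x * ((\<Sum>y\<in>UNIV. Q x y * ln (Q x y / W x y)) - (l-1)/l * (\<Sum>y\<in>UNIV. Q x y * ln (Q x y / S y)))"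
  proof (cases "0 < P x")
    case True
    have p0: "0 \<le> P x" using True by simp
    show ?thesis
      by (rule mult_left_mono[OF var_x[of Q S l x, OF Q S0 Sp l True] p0])
  next
    case False
    hence "P x = 0" using dist_nonneg[OF P, of x] by simp
    thus ?thesis by simp
  qed
qed

lemma Phi_tilt:
  assumes S0: "\<And>y. 0 \<le> S y"
    and Sp: "\<And>x y. 0 < P x \<Longrightarrow> 0 < W x y \<Longrightarrow> 0 < S y" and l: "1 < l"
  shows "CD P (tilt P W S l) W - ((l-1)/l) * CD P (tilt P W S l) (\<lambda>x. S) = - ((l-1)/l) * Fr P W S l"
  unfolding CD_split Fr_split[OF l]
proof (rule sum.cong[OF refl])
  fix x
  show "P x * ((\<Sum>y\<in>UNIV. tilt P W S l x y * ln (tilt P W S l x y / W x y)) - (l-1)/l * (\<Sum>y\<in>UNIV. tilt P W S l x y * ln (tilt P W S l x y / S y))) = P x * (- (1/l) * ln (Zf W S l x))"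
  proof (cases "0 < P x")
    case True
    show ?thesis using tilt_x[of S l x, OF S0 Sp l True] by simp
  next
    case False
    hence "P x = 0" using dist_nonneg[OF P, of x] by simp
    thus ?thesis by simp
  qed
qed

end

definition T1 :: "('x::finite \<Rightarrow> real) \<Rightarrow> ('x \<Rightarrow> 'y::finite \<Rightarrow> real) \<Rightarrow> real" where
  "T1 P Q = (\<Sum>x\<in>UNIV. P x * (\<Sum>y\<in>UNIV. phi (Q x y)))"
definition T2 :: "('x::finite \<Rightarrow> real) \<Rightarrow> ('x \<Rightarrow> 'y::finite \<Rightarrow> real) \<Rightarrow> ('x \<Rightarrow> 'y \<Rightarrow> real) \<Rightarrow> real" where
  "T2 P W Q = (\<Sum>x\<in>UNIV. P x * (\<Sum>y\<in>UNIV. Q x y * ln (W x y)))"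
definition T3 :: "('x::finite \<Rightarrow> real) \<Rightarrow> ('x \<Rightarrow> 'y::finite \<Rightarrow> real) \<Rightarrow> real" where
  "T3 P Q = (\<Sum>y\<in>UNIV. phi (out_dist P Q y))"
definition T4 :: "('x::finite \<Rightarrow> real) \<Rightarrow> ('y::finite \<Rightarrow> real) \<Rightarrow> ('x \<Rightarrow> 'y \<Rightarrow> real) \<Rightarrow> real" where
  "T4 P S Q = (\<Sum>y\<in>UNIV. out_dist P Q y * ln (S y))"

lemma phi_mix:
  assumes "0 \<le> a" "0 \<le> b" "0 < s" "s \<le> 1"
  shows "phi ((1-s)*a + s*b) \<le> (1-s)*phi a + s*phi b + (if a = 0 then s * ln s * b else 0)"
proof (cases "a = 0")
  case True thus ?thesis using phi_scale[OF assms(3,2)] by (simp add: phi_def)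
next
  case False thus ?thesis using phi_convex[OF assms(1,2)] assms(3,4) by simp
qed

lemma lin_in: "(\<Sum>y\<in>A. ((1-s)*a y + s*b y) * g y) = (1-s) * (\<Sum>y\<in>A. a y * g y) + s * (\<Sum>y\<in>A. b y * g y)"
  for a b g :: "'a \<Rightarrow> real"
  by (simp add: distrib_right sum.distrib sum_distrib_left mult.assoc)

lemma lin_out: "(\<Sum>x\<in>A. p x * ((1-s)*X x + s*Y x)) = (1-s) * (\<Sum>x\<in>A. p x * X x) + s * (\<Sum>x\<in>A. p x * Y x)"
  for p X Y :: "'a \<Rightarrow> real"
  by (simp add: distrib_left sum.distrib sum_distrib_left mult.left_commute)

lemma lin_add: "(\<Sum>y\<in>A. (1-s)*a y + s*b y) = (1-s) * (\<Sum>y\<in>A. a y) + s * (\<Sum>y\<in>A. b y)"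
  for a b :: "'a \<Rightarrow> real"
  by (simp add: sum.distrib sum_distrib_left)

lemma diff_out: "(\<Sum>x\<in>A. p x * (X x - Y x)) = (\<Sum>x\<in>A. p x * X x) - (\<Sum>x\<in>A. p x * Y x)"
  for p X Y :: "'a \<Rightarrow> real"
  by (simp add: right_diff_distrib sum_subtractf)

context
  fixes P :: "'x::finite \<Rightarrow> real" and W :: "'x \<Rightarrow> 'y::finite \<Rightarrow> real"
  assumes P: "is_dist P" and Wc: "is_channel W"
begin

lemma CDW_T: assumes Q: "Q \<in> Kset P W" shows "CD P Q W = T1 P Q - T2 P W Q"
  unfolding CDW_phi[OF P Wc Q] T1_def T2_def by (simp only: sum_subtractf diff_out)

lemma MI_T: "is_channel Q \<Longrightarrow> MI P Q = T1 P Q - T3 P Q"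
  unfolding MI_phi[OF P Wc] T1_def T3_def by simp

lemma L0_phi: assumes Q: "Q \<in> Kset P W"
  shows "CD P Q W - r * MI P Q = (1 - r) * T1 P Q - T2 P W Q + r * T3 P Q"
  unfolding CDW_T[OF Q] MI_T[OF K_chan[OF P Wc Q]] by (simp add: algebra_simps)

lemma CDS_T: assumes Q: "Q \<in> Kset P W" and Sp: "\<And>x y. 0 < P x \<Longrightarrow> 0 < W x y \<Longrightarrow> 0 < S y"
  shows "CD P Q (\<lambda>x. S) = T1 P Q - T4 P S Q"
proof -
  have "CD P Q (\<lambda>x. S) = (\<Sum>x\<in>UNIV. P x * (\<Sum>y\<in>UNIV. phi (Q x y) - Q x y * ln (S y)))"
    by (rule CDS_phi[OF P Wc Q Sp])
  also have "\<dots> = T1 P Q - (\<Sum>x\<in>UNIV. P x * (\<Sum>y\<in>UNIV. Q x y * ln (S y)))"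
    unfolding T1_def by (simp only: sum_subtractf diff_out)
  also have "(\<Sum>x\<in>UNIV. P x * (\<Sum>y\<in>UNIV. Q x y * ln (S y))) = T4 P S Q"
    unfolding T4_def by (rule sum_swap_out[OF P Wc])
  finally show ?thesis .
qed

lemma T1_conv:
  assumes "is_channel Q1" "is_channel Q2" "0 \<le> s" "s \<le> 1"
  shows "T1 P (mix s Q1 Q2) \<le> (1-s) * T1 P Q1 + s * T1 P Q2"
proof -
  have "T1 P (mix s Q1 Q2) \<le> (\<Sum>x\<in>UNIV. P x * (\<Sum>y\<in>UNIV. (1-s) * phi (Q1 x y) + s * phi (Q2 x y)))"
    unfolding T1_def mix_def
    by (intro sum_mono mult_left_mono phi_convex) (use assms chan_nonneg dist_nonneg[OF P] in auto)
  also have "\<dots> = (1-s) * T1 P Q1 + s * T1 P Q2"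
    unfolding T1_def lin_add lin_out ..
  finally show ?thesis .
qed

lemma T2_lin: "T2 P W (mix s Q1 Q2) = (1-s) * T2 P W Q1 + s * T2 P W Q2"
  unfolding T2_def mix_def lin_in lin_out ..

lemma T4_lin: "T4 P S (mix s Q1 Q2) = (1-s) * T4 P S Q1 + s * T4 P S Q2"
  unfolding T4_def out_mix[OF P Wc] lin_in ..

lemma T3_conv_extra:
  assumes "is_channel Q1" "is_channel Q2" "0 < s" "s \<le> 1"
  shows "T3 P (mix s Q1 Q2) \<le> (1-s) * T3 P Q1 + s * T3 P Q2
     + (\<Sum>y\<in>UNIV. if out_dist P Q1 y = 0 then s * ln s * out_dist P Q2 y else 0)"
proof -
  have "T3 P (mix s Q1 Q2) \<le> (\<Sum>y\<in>UNIV. (1-s) * phi (out_dist P Q1 y) + s * phi (out_dist P Q2 y)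
      + (if out_dist P Q1 y = 0 then s * ln s * out_dist P Q2 y else 0))"
    unfolding T3_def out_mix[OF P Wc]
    by (intro sum_mono phi_mix) (use assms out_nonneg[OF P] in auto)
  also have "\<dots> = (1-s) * T3 P Q1 + s * T3 P Q2
     + (\<Sum>y\<in>UNIV. if out_dist P Q1 y = 0 then s * ln s * out_dist P Q2 y else 0)"
    unfolding T3_def sum.distrib sum_distrib_left ..
  finally show ?thesis .
qed

lemma T3_conv:
  assumes "is_channel Q1" "is_channel Q2" "0 \<le> s" "s \<le> 1"
  shows "T3 P (mix s Q1 Q2) \<le> (1-s) * T3 P Q1 + s * T3 P Q2"
proof -
  have "T3 P (mix s Q1 Q2) \<le> (\<Sum>y\<in>UNIV. (1-s) * phi (out_dist P Q1 y) + s * phi (out_dist P Q2 y))"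
    unfolding T3_def out_mix[OF P Wc]
    by (intro sum_mono phi_convex) (use assms out_nonneg[OF P] in auto)
  also have "\<dots> = (1-s) * T3 P Q1 + s * T3 P Q2"
    unfolding T3_def lin_add ..
  finally show ?thesis .
qed

end

lemma sum_le_single:
  fixes f :: "'a::finite \<Rightarrow> real"
  assumes "\<And>z. z \<noteq> y \<Longrightarrow> f z \<le> 0"
  shows "(\<Sum>z\<in>UNIV. f z) \<le> f y"
proof -
  have "(\<Sum>z\<in>UNIV. f z) = f y + (\<Sum>z\<in>UNIV - {y}. f z)"
    by (simp add: sum.remove)
  moreover have "(\<Sum>z\<in>UNIV - {y}. f z) \<le> 0" by (rule sum_nonpos) (use assms in auto)
  ultimately show ?thesis by simp
qed

lemma s_ln_s_nonpos: "0 < s \<Longrightarrow> s \<le> (1::real) \<Longrightarrow> s * ln s \<le> 0"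
  by (simp add: mult_nonneg_nonpos)

context
  fixes P :: "'x::finite \<Rightarrow> real" and W :: "'x \<Rightarrow> 'y::finite \<Rightarrow> real"
  assumes P: "is_dist P" and Wc: "is_channel W"
begin

lemma pos_out:
  assumes r: "0 < r" "r \<le> 1" and Q0: "Q0 \<in> Kset P W"
    and min: "\<And>Q. Q \<in> Kset P W \<Longrightarrow> CD P Q0 W - r * MI P Q0 \<le> CD P Q W - r * MI P Q"
    and x: "0 < P x" "0 < W x y"
  shows "0 < out_dist P Q0 y"
proof (rule ccontr)
  assume "\<not> 0 < out_dist P Q0 y"
  hence y0: "out_dist P Q0 y = 0" using out_nonneg[OF P K_chan[OF P Wc Q0], of y] by simp
  define L where "L Q = (1 - r) * T1 P Q - T2 P W Q + r * T3 P Q" for Q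
  have LK: "CD P Q W - r * MI P Q = L Q" if "Q \<in> Kset P W" for Q
    using L0_phi[OF P Wc that] by (simp add: L_def)
  have Q0c: "is_channel Q0" using K_chan[OF P Wc Q0] .
  define c where "c = out_dist P W y"
  have c: "0 < c" unfolding c_def by (rule out_pos[OF P Wc x])
  define d where "d = L W - L Q0"
  have key: "0 \<le> d + r * c * ln s" if s: "0 < s" "s \<le> 1" for s
  proof -
    let ?Qs = "mix s Q0 W"
    have QsK: "?Qs \<in> Kset P W" using mix_K[OF P Wc Q0 W_K[OF P Wc]] s by simp
    have t1: "(1 - r) * T1 P ?Qs \<le> (1 - r) * ((1-s) * T1 P Q0 + s * T1 P W)"
      by (rule mult_left_mono[OF T1_conv[OF P Wc Q0c Wc]]) (use s r in auto)
    have E: "(\<Sum>z\<in>UNIV. if out_dist P Q0 z = 0 then s * ln s * out_dist P W z else 0) \<le> s * ln s * c"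
    proof -
      have "(\<Sum>z\<in>UNIV. if out_dist P Q0 z = 0 then s * ln s * out_dist P W z else 0)
          \<le> (if out_dist P Q0 y = 0 then s * ln s * out_dist P W y else 0)"
        by (rule sum_le_single) (use s_ln_s_nonpos[OF s] out_nonneg[OF P Wc] in \<open>auto intro: mult_nonpos_nonneg\<close>)
      thus ?thesis using y0 by (simp add: c_def)
    qed
    have t3: "r * T3 P ?Qs \<le> r * ((1-s) * T3 P Q0 + s * T3 P W + s * ln s * c)"
      using T3_conv_extra[OF P Wc Q0c Wc s] E r by (intro mult_left_mono) auto
    have "L ?Qs \<le> (1-s) * L Q0 + s * L W + r * (s * ln s * c)"
      using t1 t3 unfolding L_def T2_lin[OF P Wc] by (simp add: algebra_simps)
    moreover have "L Q0 \<le> L ?Qs" using min[OF QsK] LK[OF Q0] LK[OF QsK] by simp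
    ultimately have "0 \<le> s * (d + r * c * ln s)" unfolding d_def by (simp add: algebra_simps)
    thus ?thesis using s by (simp add: zero_le_mult_iff)
  qed
  define s where "s = exp (- (\<bar>d\<bar> + 1) / (r * c))"
  have s0: "0 < s" by (simp add: s_def)
  have "(- (\<bar>d\<bar> + 1)) / (r * c) \<le> 0" using r c by (intro divide_nonpos_pos) auto
  hence s1: "s \<le> 1" unfolding s_def by simp
  have "r * c * ln s = - (\<bar>d\<bar> + 1)" unfolding s_def using r c by simp
  thus False using key[OF s0 s1] by linarith
qed

end

lemma chi_term:
  fixes q S :: real
  assumes "0 \<le> q" "0 \<le> S" "0 < q \<Longrightarrow> 0 < S"
  shows "phi q - q * ln S \<le> (q - S)^2 / S + (q - S)"
proof (cases "q = 0")
  case True thus ?thesis using assms by (simp add: phi_def power2_eq_square)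
next
  case False
  hence q: "0 < q" using assms by simp
  hence s: "0 < S" using assms by simp
  have "ln (q / S) \<le> q / S - 1" using ln_le_minus_one q s by simp
  hence "q * ln (q / S) \<le> q * (q / S - 1)" using q by (simp add: mult_left_mono)
  moreover have "q * ln (q / S) = phi q - q * ln S" using q s by (simp add: phi_def ln_div algebra_simps)
  moreover have "q * (q / S - 1) = (q - S)^2 / S + (q - S)" using s
    by (simp add: field_simps power2_eq_square)
  ultimately show ?thesis by simp
qed

context
  fixes P :: "'x::finite \<Rightarrow> real" and W :: "'x \<Rightarrow> 'y::finite \<Rightarrow> real"
  assumes P: "is_dist P" and Wc: "is_channel W"
begin

lemma chi_bound:
  assumes Q: "is_channel Q" and S: "is_dist S"
    and sup: "\<And>y. 0 < out_dist P Q y \<Longrightarrow> 0 < S y"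
  shows "T3 P Q - T4 P S Q \<le> (\<Sum>y\<in>UNIV. (out_dist P Q y - S y)^2 / S y)"
proof -
  have "T3 P Q - T4 P S Q = (\<Sum>y\<in>UNIV. phi (out_dist P Q y) - out_dist P Q y * ln (S y))"
    by (simp add: T3_def T4_def sum_subtractf)
  also have "\<dots> \<le> (\<Sum>y\<in>UNIV. (out_dist P Q y - S y)^2 / S y + (out_dist P Q y - S y))"
    by (rule sum_mono, rule chi_term) (use out_nonneg[OF P Q] dist_nonneg[OF S] sup in auto)
  also have "\<dots> = (\<Sum>y\<in>UNIV. (out_dist P Q y - S y)^2 / S y)"
    using dist_sum[OF out_dist_is_dist[OF P Q]] dist_sum[OF S] by (simp add: sum.distrib sum_subtractf)
  finally show ?thesis .
qed

lemma tilt_opt: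
  assumes l: "1 < l" and Q0: "Q0 \<in> Kset P W"
    and min: "\<And>Q. Q \<in> Kset P W \<Longrightarrow> CD P Q0 W - ((l-1)/l) * MI P Q0 \<le> CD P Q W - ((l-1)/l) * MI P Q"
  shows "CD P Q0 W - ((l-1)/l) * MI P Q0 \<le> - ((l-1)/l) * Fr P W (out_dist P Q0) l"
proof -
  define r where "r = (l-1)/l"
  have r: "0 < r" "r \<le> 1" using l by (auto simp: r_def)
  have Q0c: "is_channel Q0" using K_chan[OF P Wc Q0] .
  define S where "S = out_dist P Q0"
  have Sd: "is_dist S" unfolding S_def by (rule out_dist_is_dist[OF P Q0c])
  have S0: "0 \<le> S y" for y using dist_nonneg[OF Sd] .
  have Sp: "0 < S y" if "0 < P x" "0 < W x y" for x y
    unfolding S_def by (rule pos_out[OF P Wc r Q0 min[folded r_def] that])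
  define QS where "QS = tilt P W S l"
  have QSK: "QS \<in> Kset P W" unfolding QS_def by (rule tilt_K[OF P Wc S0 Sp])
  have QSc: "is_channel QS" using K_chan[OF P Wc QSK] .
  define Phi where "Phi Q = (1 - r) * T1 P Q - T2 P W Q + r * T4 P S Q" for Q
  have PhiK: "CD P Q W - r * CD P Q (\<lambda>x. S) = Phi Q" if "Q \<in> Kset P W" for Q
  proof -
    have a: "CD P Q W = T1 P Q - T2 P W Q" by (rule CDW_T[OF P Wc that])
    have b: "CD P Q (\<lambda>x. S) = T1 P Q - T4 P S Q" by (rule CDS_T[OF P Wc that Sp])
    show ?thesis unfolding a b Phi_def by (simp add: algebra_simps)
  qed
  have LK: "CD P Q W - r * MI P Q = Phi Q + r * (T3 P Q - T4 P S Q)" if "Q \<in> Kset P W" for Q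
    unfolding L0_phi[OF P Wc that] Phi_def by (simp add: algebra_simps)
  have T34: "T3 P Q0 - T4 P S Q0 = 0"
    by (simp add: T3_def T4_def S_def phi_def)
  define C where "C = (\<Sum>y\<in>UNIV. (out_dist P QS y - S y)^2 / S y)"
  have C0: "0 \<le> C" unfolding C_def by (intro sum_nonneg divide_nonneg_nonneg) (auto simp: S0)
  have key: "Phi Q0 \<le> Phi QS + r * s * C" if s: "0 < s" "s \<le> 1" for s
  proof -
    let ?Qs = "mix s Q0 QS"
    have QsK: "?Qs \<in> Kset P W" using mix_K[OF P Wc Q0 QSK] s by simp
    have Qsc: "is_channel ?Qs" using K_chan[OF P Wc QsK] .
    have ph: "Phi ?Qs \<le> (1-s) * Phi Q0 + s * Phi QS"
    proof -
      have "(1 - r) * T1 P ?Qs \<le> (1 - r) * ((1-s) * T1 P Q0 + s * T1 P QS)"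
        by (rule mult_left_mono[OF T1_conv[OF P Wc Q0c QSc]]) (use s r in auto)
      thus ?thesis unfolding Phi_def T2_lin[OF P Wc] T4_lin[OF P Wc] by (simp add: algebra_simps)
    qed
    have supQs: "0 < S y" if h: "0 < out_dist P ?Qs y" for y
    proof -
      obtain x where "0 < P x" "0 < ?Qs x y" using out_pos_ex[OF P Wc Qsc h] by blast
      thus ?thesis using K_supp[OF P Wc QsK] Sp by blast
    qed
    have "T3 P ?Qs - T4 P S ?Qs \<le> (\<Sum>y\<in>UNIV. (out_dist P ?Qs y - S y)^2 / S y)"
      by (rule chi_bound[OF Qsc Sd supQs])
    also have "\<dots> = s^2 * C"
    proof -
      have "out_dist P ?Qs y - S y = s * (out_dist P QS y - S y)" for y
        unfolding out_mix[OF P Wc] S_def by (simp add: algebra_simps)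
      thus ?thesis unfolding C_def by (simp add: power_mult_distrib sum_distrib_left)
    qed
    finally have ch: "T3 P ?Qs - T4 P S ?Qs \<le> s^2 * C" .
    have "Phi Q0 \<le> Phi ?Qs + r * (T3 P ?Qs - T4 P S ?Qs)"
      using min[OF QsK] LK[OF Q0] LK[OF QsK] T34 unfolding r_def by simp
    also have "\<dots> \<le> (1-s) * Phi Q0 + s * Phi QS + r * (s^2 * C)"
      using ph ch r by (smt (verit) mult_left_mono)
    finally have "s * Phi Q0 \<le> s * (Phi QS + r * s * C)" by (simp add: algebra_simps power2_eq_square)
    thus ?thesis using s by simp
  qed
  have "Phi Q0 \<le> Phi QS"
  proof (rule field_le_epsilon)
    fix e :: real assume e: "0 < e"
    define s where "s = min 1 (e / (r * C + 1))"
    have "0 < r * C + 1" using r C0 by (smt (verit) mult_nonneg_nonneg)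
    hence s: "0 < s" "s \<le> 1" using e by (auto simp: s_def)
    have "r * s * C \<le> r * (e / (r * C + 1)) * C"
      using r C0 by (intro mult_right_mono mult_left_mono) (auto simp: s_def)
    also have "\<dots> = e * (r * C / (r * C + 1))" by simp
    also have "\<dots> \<le> e * 1"
    proof (intro mult_left_mono)
      have "0 \<le> r * C" using r C0 by simp
      thus "r * C / (r * C + 1) \<le> 1" by simp
    qed (use e in simp)
    finally show "Phi Q0 \<le> Phi QS + e" using key[OF s] by simp
  qed
  moreover have "Phi QS = - r * Fr P W S l"
    using Phi_tilt[OF P Wc S0 Sp l] PhiK[OF QSK] unfolding QS_def r_def by simp
  moreover have "CD P Q0 W - r * MI P Q0 = Phi Q0"
    using LK[OF Q0] T34 by simp
  ultimately show ?thesis unfolding r_def S_def by simp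
qed

end

lemma coord_cont: "continuous_on S (\<lambda>Q::'x \<Rightarrow> 'y \<Rightarrow> real. Q x y)"
proof -
  have c1: "continuous_on UNIV (\<lambda>Q::'x \<Rightarrow> 'y \<Rightarrow> real. Q x)" by simp
  have c2: "continuous_on UNIV (\<lambda>q::'y \<Rightarrow> real. q y)" by simp
  have "continuous_on UNIV ((\<lambda>q::'y \<Rightarrow> real. q y) \<circ> (\<lambda>Q::'x \<Rightarrow> 'y \<Rightarrow> real. Q x))"
    by (rule continuous_on_compose[OF c1]) (use c2 continuous_on_subset in blast)
  hence "continuous_on UNIV (\<lambda>Q::'x \<Rightarrow> 'y \<Rightarrow> real. Q x y)" by (simp add: o_def)
  thus ?thesis using continuous_on_subset by blast
qed

lemma box_compact: "compact {Q :: 'x \<Rightarrow> 'y \<Rightarrow> real. \<forall>x y. Q x y \<in> {0..1}}"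
proof -
  have inner: "compact (PiE (UNIV::'y set) (\<lambda>_. {0..1::real}))"
  proof -
    have "compactin (product_topology (\<lambda>_. euclidean) (UNIV::'y set)) (PiE UNIV (\<lambda>_. {0..1::real}))"
      by (subst compactin_PiE) auto
    thus ?thesis by (simp add: euclidean_product_topology)
  qed
  have "compactin (product_topology (\<lambda>_. euclidean) (UNIV::'x set)) (PiE UNIV (\<lambda>_. PiE (UNIV::'y set) (\<lambda>_. {0..1::real})))"
    by (subst compactin_PiE) (use inner in auto)
  hence "compact (PiE (UNIV::'x set) (\<lambda>_. PiE (UNIV::'y set) (\<lambda>_. {0..1::real})))"
    by (simp add: euclidean_product_topology)
  moreover have "PiE (UNIV::'x set) (\<lambda>_. PiE (UNIV::'y set) (\<lambda>_. {0..1::real})) = {Q. \<forall>x y. Q x y \<in> {0..1}}"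
    by (auto simp: PiE_UNIV_domain Pi_iff)
  ultimately show ?thesis by simp
qed

lemma K_closed: "closed (Kset P W)"
proof -
  have "Kset P W = {Q. (\<forall>x y. 0 \<le> Q x y) \<and> (\<forall>x. (\<Sum>y\<in>UNIV. Q x y) = 1) \<and> (\<forall>x y. 0 < P x \<and> W x y = 0 \<longrightarrow> Q x y = 0)}"
    by (auto simp: Kset_def is_channel_def is_dist_def)
  also have "closed \<dots>"
    by (intro closed_Collect_conj closed_Collect_all closed_Collect_imp closed_Collect_le closed_Collect_eq
        continuous_on_sum coord_cont continuous_on_const) (auto simp: open_Collect_const)
  finally show ?thesis .
qed

lemma K_compact: "compact (Kset (P::'x::finite \<Rightarrow> real) (W :: 'x \<Rightarrow> 'y::finite \<Rightarrow> real))"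
proof -
  have e: "Kset P W = {Q :: 'x \<Rightarrow> 'y \<Rightarrow> real. \<forall>x y. Q x y \<in> {0..1}} \<inter> Kset P W"
    by (auto simp: Kset_def intro: chan_nonneg chan_le1)
  show ?thesis by (subst e) (rule compact_Int_closed[OF box_compact K_closed])
qed

context
  fixes P :: "'x::finite \<Rightarrow> real" and W :: "'x \<Rightarrow> 'y::finite \<Rightarrow> real"
  assumes P: "is_dist P" and Wc: "is_channel W"
begin

lemma T1_cont: "continuous_on (Kset P W) (\<lambda>Q. T1 P Q)"
  unfolding T1_def
proof (intro continuous_on_sum continuous_on_mult continuous_on_const)
  fix x y
  show "continuous_on (Kset P W) (\<lambda>Q. phi (Q x y))"
    by (rule continuous_on_compose2[OF phi_cont coord_cont])
       (auto simp: Kset_def intro: chan_nonneg chan_le1)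
qed

lemma T2_cont: "continuous_on (Kset P W) (\<lambda>Q. T2 P W Q)"
  unfolding T2_def by (intro continuous_on_sum continuous_on_mult continuous_on_const coord_cont)

lemma out_cont: "continuous_on S (\<lambda>Q. out_dist P Q y)"
  unfolding out_dist_def by (intro continuous_on_sum continuous_on_mult continuous_on_const coord_cont)

lemma T3_cont: "continuous_on (Kset P W) (\<lambda>Q. T3 P Q)"
  unfolding T3_def
proof (intro continuous_on_sum)
  fix y
  show "continuous_on (Kset P W) (\<lambda>Q. phi (out_dist P Q y))"
    by (rule continuous_on_compose2[OF phi_cont out_cont])
       (auto simp: Kset_def intro: out_nonneg[OF P] out_le1[OF P])
qed

definition Af :: "('x \<Rightarrow> 'y \<Rightarrow> real) \<Rightarrow> real" where "Af Q = T1 P Q - T2 P W Q"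
definition Bf :: "real \<Rightarrow> ('x \<Rightarrow> 'y \<Rightarrow> real) \<Rightarrow> real" where
  "Bf R Q = (1/2) * T1 P Q - T2 P W Q + (1/2) * T3 P Q + R / 2"

lemma Af_K: assumes Q: "Q \<in> Kset P W" shows "Af Q = CD P Q W"
  unfolding CDW_T[OF P Wc Q] by (simp add: Af_def)

lemma Bf_K: assumes Q: "Q \<in> Kset P W" shows "Bf R Q = CD P Q W + (1/2) * (R - MI P Q)"
  unfolding CDW_T[OF P Wc Q] MI_T[OF P Wc K_chan[OF P Wc Q]] by (simp add: Bf_def algebra_simps)

lemma Af_conv: "Q1 \<in> Kset P W \<Longrightarrow> Q2 \<in> Kset P W \<Longrightarrow> 0 \<le> s \<Longrightarrow> s \<le> 1 \<Longrightarrow>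
   Af (mix s Q1 Q2) \<le> (1-s) * Af Q1 + s * Af Q2"
  using T1_conv[OF P Wc K_chan[OF P Wc] K_chan[OF P Wc], of Q1 Q2 s]
  unfolding Af_def T2_lin[OF P Wc] by (simp add: algebra_simps)

lemma Bf_conv: "Q1 \<in> Kset P W \<Longrightarrow> Q2 \<in> Kset P W \<Longrightarrow> 0 \<le> s \<Longrightarrow> s \<le> 1 \<Longrightarrow>
   Bf R (mix s Q1 Q2) \<le> (1-s) * Bf R Q1 + s * Bf R Q2"
  using T1_conv[OF P Wc K_chan[OF P Wc] K_chan[OF P Wc], of Q1 Q2 s]
    T3_conv[OF P Wc K_chan[OF P Wc] K_chan[OF P Wc], of Q1 Q2 s]
  unfolding Bf_def T2_lin[OF P Wc] by (simp add: algebra_simps) (simp add: diff_divide_distrib add_divide_distrib)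

lemma min_exists:
  "\<exists>Q0\<in>Kset P W. \<forall>Q\<in>Kset P W. max (Af Q0) (Bf R Q0) \<le> max (Af Q) (Bf R Q)"
proof (rule continuous_attains_inf[OF K_compact])
  show "Kset P W \<noteq> {}" using W_K[OF P Wc] by blast
  show "continuous_on (Kset P W) (\<lambda>Q. max (Af Q) (Bf R Q))"
    unfolding Af_def Bf_def
    by (intro continuous_on_max continuous_on_add continuous_on_diff continuous_on_mult
        continuous_on_const T1_cont T2_cont T3_cont)
qed

end

lemma comb_eq: "0 < p+q \<Longrightarrow> (p*(a-v) + q*(b-v))/(p+q) = (1 - q/(p+q))*a + (q/(p+q))*b - v"
  for p q a b v :: real
proof -
  assume h: "0 < p+q"
  have "1 - q/(p+q) = p/(p+q)" using h by (simp add: field_simps)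
  hence "(1 - q/(p+q))*a + (q/(p+q))*b - v = (p*a)/(p+q) + (q*b)/(p+q) - ((p+q) * v)/(p+q)"
    using h by simp
  also have "\<dots> = (p*(a-v) + q*(b-v))/(p+q)"
    by (simp add: add_divide_distrib[symmetric] diff_divide_distrib[symmetric] algebra_simps)
  finally show ?thesis by simp
qed

lemma sep2:
  fixes A B :: "'q \<Rightarrow> real" and K :: "'q set" and v :: real
  assumes conv: "convex {z::real\<times>real. \<exists>Q\<in>K. A Q - v \<le> fst z \<and> B Q - v \<le> snd z}"
    and Kne: "K \<noteq> {}"
    and min: "\<And>Q. Q \<in> K \<Longrightarrow> v \<le> max (A Q) (B Q)"
  shows "\<exists>t\<in>{0..1}. \<forall>Q\<in>K. v \<le> (1-t) * A Q + t * B Q"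
proof -
  define C where "C = {z::real\<times>real. \<exists>Q\<in>K. A Q - v \<le> fst z \<and> B Q - v \<le> snd z}"
  define N where "N = {z::real\<times>real. fst z < 0 \<and> snd z < 0}"
  have cN: "convex N"
  proof -
    have "N = {z. fst z < 0} \<inter> {z. snd z < 0}" unfolding N_def by auto
    moreover have "convex {z::real\<times>real. fst z < 0}" using convex_halfspace_lt[of "(1::real,0::real)" 0]
      by (simp add: inner_prod_def)
    moreover have "convex {z::real\<times>real. snd z < 0}" using convex_halfspace_lt[of "(0::real,1::real)" 0]
      by (simp add: inner_prod_def)
    ultimately show ?thesis by (simp add: convex_Int)
  qed
  have Cne: "C \<noteq> {}"
  proof -
    obtain Q where "Q \<in> K" using Kne by blast
    hence "(A Q - v, B Q - v) \<in> C" unfolding C_def by auto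
    thus ?thesis by blast
  qed
  have "(-1,-1) \<in> N" unfolding N_def by simp
  hence Nne: "N \<noteq> {}" by blast
  have disj: "N \<inter> C = {}"
  proof (rule ccontr)
    assume "N \<inter> C \<noteq> {}"
    then obtain z Q where "fst z < 0" "snd z < 0" "Q \<in> K" "A Q - v \<le> fst z" "B Q - v \<le> snd z"
      unfolding N_def C_def by blast
    thus False using min[of Q] by linarith
  qed
  obtain a b where a0: "a \<noteq> 0" and aN: "\<forall>x\<in>N. inner a x \<le> b" and aC: "\<forall>x\<in>C. inner a x \<ge> b"
    using separating_hyperplane_sets[OF cN conv[folded C_def] Nne Cne disj] by blast
  obtain p q where pq: "a = (p, q)" by (cases a)
  have Nin: "p * z1 + q * z2 \<le> b" if "z1 < 0" "z2 < 0" for z1 z2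
    using aN[rule_format, of "(z1,z2)"] that pq by (simp add: N_def inner_Pair)
  have b0: "0 \<le> b"
  proof (rule ccontr)
    assume "\<not> 0 \<le> b"
    hence b: "b < 0" by simp
    define e where "e = - b / (\<bar>p\<bar> + \<bar>q\<bar> + 1)"
    have "0 < \<bar>p\<bar> + \<bar>q\<bar> + 1" by simp
    hence e: "0 < e" unfolding e_def using b by (intro divide_pos_pos) auto
    have "(\<bar>p\<bar> + \<bar>q\<bar> + 1) * e = - b" unfolding e_def by simp
    hence "\<bar>p\<bar> * e + \<bar>q\<bar> * e + e = - b" by (simp add: algebra_simps)
    moreover have "p * e \<le> \<bar>p\<bar> * e" by (rule mult_right_mono) (use e in auto)
    moreover have "q * e \<le> \<bar>q\<bar> * e" by (rule mult_right_mono) (use e in auto)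
    moreover have "p * (-e) + q * (-e) \<le> b" by (rule Nin) (use e in auto)
    hence "- (p * e) - q * e \<le> b" by simp
    ultimately show False using e by linarith
  qed
  have p0: "0 \<le> p"
  proof (rule ccontr)
    assume "\<not> 0 \<le> p"
    hence p: "p < 0" by simp
    define M where "M = (\<bar>b\<bar> + \<bar>q\<bar> + 1) / (- p)"
    have "0 < \<bar>b\<bar> + \<bar>q\<bar> + 1" by simp
    hence M: "0 < M" unfolding M_def using p by (intro divide_pos_pos) auto
    have "p * (-M) = \<bar>b\<bar> + \<bar>q\<bar> + 1" unfolding M_def using p by simp
    moreover have "p * (-M) + q * (-1) \<le> b" by (rule Nin) (use M in auto)
    ultimately show False by linarith
  qed
  have q0: "0 \<le> q"
  proof (rule ccontr)
    assume "\<not> 0 \<le> q"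
    hence q: "q < 0" by simp
    define M where "M = (\<bar>b\<bar> + \<bar>p\<bar> + 1) / (- q)"
    have "0 < \<bar>b\<bar> + \<bar>p\<bar> + 1" by simp
    hence M: "0 < M" unfolding M_def using q by (intro divide_pos_pos) auto
    have "q * (-M) = \<bar>b\<bar> + \<bar>p\<bar> + 1" unfolding M_def using q by simp
    moreover have "p * (-1) + q * (-M) \<le> b" by (rule Nin) (use M in auto)
    ultimately show False by linarith
  qed
  have "p \<noteq> 0 \<or> q \<noteq> 0" using a0 pq by (auto simp: zero_prod_def)
  hence pq0: "0 < p + q" using p0 q0 by auto
  define t where "t = q / (p + q)"
  have t: "t \<in> {0..1}" unfolding t_def using p0 q0 pq0 by auto
  have "v \<le> (1-t) * A Q + t * B Q" if Q: "Q \<in> K" for Q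
  proof -
    have "(A Q - v, B Q - v) \<in> C" unfolding C_def using Q by auto
    hence "b \<le> inner a (A Q - v, B Q - v)" using aC by blast
    hence "b \<le> p * (A Q - v) + q * (B Q - v)" using pq by (simp add: inner_Pair)
    hence "0 \<le> p * (A Q - v) + q * (B Q - v)" using b0 by simp
    hence "0 \<le> (p * (A Q - v) + q * (B Q - v)) / (p + q)" using pq0 by simp
    also have "(p * (A Q - v) + q * (B Q - v)) / (p + q) = (1-t) * A Q + t * B Q - v"
      unfolding t_def by (rule comb_eq[OF pq0])
    finally show ?thesis by simp
  qed
  thus ?thesis using t by blast
qed

context
  fixes P :: "'x::finite \<Rightarrow> real" and W :: "'x \<Rightarrow> 'y::finite \<Rightarrow> real"
  assumes P: "is_dist P" and Wc: "is_channel W"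
begin

lemma CD_nonneg: assumes Q: "Q \<in> Kset P W" shows "0 \<le> CD P Q W"
  unfolding CD_def
proof (intro sum_nonneg)
  fix x
  show "0 \<le> P x * (\<Sum>y\<in>UNIV. Q x y * ln (Q x y / W x y))"
  proof (cases "0 < P x")
    case True
    have "0 \<le> (\<Sum>y\<in>UNIV. Q x y * ln (Q x y / W x y))"
      by (rule gibbs) (use K_chan[OF P Wc Q] Wc K_supp[OF P Wc Q True] in \<open>auto simp: is_channel_def\<close>)
    thus ?thesis using True by simp
  next
    case False
    hence "P x = 0" using dist_nonneg[OF P, of x] by simp
    thus ?thesis by simp
  qed
qed

lemma f_K:
  assumes Q: "Q \<in> Kset P W"
  shows "rel_ent (joint P Q) (joint P W) + ereal (1/2) * max 0 (ereal R - rel_ent (joint P Q) (prod_dist P (out_dist P Q)))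
     = ereal (CD P Q W + 1/2 * max 0 (R - MI P Q))"
proof -
  have Qc: "is_channel Q" using K_chan[OF P Wc Q] .
  have a: "rel_ent (joint P Q) (joint P W) = ereal (CD P Q W)"
    by (rule rel_ent_joint[OF P Qc]) (rule K_supp[OF P Wc Q])
  have b: "rel_ent (joint P Q) (prod_dist P (out_dist P Q)) = ereal (MI P Q)"
    unfolding MI_def by (rule rel_ent_prod[OF P Qc]) (rule out_pos[OF P Qc])
  show ?thesis unfolding a b by (simp add: zero_ereal_def[symmetric] max_def)
qed

lemma f_notK:
  assumes Qc: "is_channel Q" and nK: "Q \<notin> Kset P W"
  shows "rel_ent (joint P Q) (joint P W) + ereal (1/2) * max 0 (ereal R - rel_ent (joint P Q) (prod_dist P (out_dist P Q))) = \<infinity>"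
proof -
  obtain x y where "0 < P x" "W x y = 0" "Q x y \<noteq> 0" using nK Qc by (auto simp: Kset_def)
  hence xy: "0 < P x" "W x y = 0" "0 < Q x y" using chan_nonneg[OF Qc, of x y] by auto
  have a: "rel_ent (joint P Q) (joint P W) = \<infinity>" by (rule rel_ent_inf[where P=P and Q=Q and V=W and x=x and y=y, OF xy(1,3,2)])
  have b: "rel_ent (joint P Q) (prod_dist P (out_dist P Q)) = ereal (MI P Q)"
    unfolding MI_def by (rule rel_ent_prod[OF P Qc]) (rule out_pos[OF P Qc])
  show ?thesis unfolding a b by (simp add: zero_ereal_def[symmetric] max_def)
qed

lemma renyi_fin:
  assumes l: "1 < l" and x: "0 < P x" and S0: "\<And>y. 0 \<le> S y"
    and Sp: "\<And>x y. 0 < P x \<Longrightarrow> 0 < W x y \<Longrightarrow> 0 < S y"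
  shows "renyi_div l (W x) S = ereal (1 / (l - 1) * ln (Zf W S l x))"
proof -
  have s: "(\<Sum>a | W x a > 0. W x a powr l * S a powr (1 - l)) = Zf W S l x"
    unfolding Zf_def
  proof (rule sum.mono_neutral_left)
    show "\<forall>i\<in>UNIV - {a. 0 < W x a}. W x i powr l * S i powr (1 - l) = 0"
      using chan_nonneg[OF Wc, of x] by (auto simp: less_le)
  qed auto
  have Z: "0 < Zf W S l x" by (rule Zf_pos[OF P Wc S0 Sp x])
  have ac: "\<forall>a. W x a > 0 \<longrightarrow> S a > 0" using Sp[OF x] by blast
  show ?thesis unfolding renyi_div_def Let_def s using l Z ac by auto
qed

lemma renyi_inf:
  assumes l: "1 < l" and "0 < W x y" "S y = 0"
  shows "renyi_div l (W x) S = \<infinity>"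
  unfolding renyi_div_def Let_def using assms by auto

lemma renyi_not_minf:
  shows "renyi_div l (W x) S \<noteq> - \<infinity>"
  unfolding renyi_div_def Let_def rel_ent_def by auto

definition Tsum :: "real \<Rightarrow> ('y \<Rightarrow> real) \<Rightarrow> ereal" where
  "Tsum l S = (\<Sum>x\<in>UNIV. ereal (P x) * renyi_div l (W x) S)"

lemma Tsum_fin:
  assumes l: "1 < l" and S0: "\<And>y. 0 \<le> S y"
    and Sp: "\<And>x y. 0 < P x \<Longrightarrow> 0 < W x y \<Longrightarrow> 0 < S y"
  shows "Tsum l S = ereal (Fr P W S l)"
proof -
  have "ereal (P x) * renyi_div l (W x) S = ereal (P x * (1 / (l - 1) * ln (Zf W S l x)))" for x
  proof (cases "0 < P x")
    case True
    have "renyi_div l (W x) S = ereal (1 / (l - 1) * ln (Zf W S l x))"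
      by (rule renyi_fin) (use l True S0 Sp in auto)
    thus ?thesis by simp
  next
    case False
    hence "P x = 0" using dist_nonneg[OF P, of x] by simp
    thus ?thesis by (simp add: zero_ereal_def[symmetric])
  qed
  thus ?thesis unfolding Tsum_def Fr_def by (simp add: sum_ereal)
qed

lemma Tsum_inf:
  assumes l: "1 < l" and "0 < P x" "0 < W x y" "S y = 0"
  shows "Tsum l S = \<infinity>"
proof -
  have "ereal (P x) * renyi_div l (W x) S = \<infinity>"
    using renyi_inf[where l=l and x=x and y=y and S=S, OF l assms(3,4)] assms(2) by simp
  thus ?thesis unfolding Tsum_def sum_Pinfty by auto
qed

lemma cmi_Tsum: "csiszar_mi l P W = (INF S \<in> {S. is_dist S}. Tsum l S)"
  unfolding csiszar_mi_def Tsum_def ..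

end

lemma comb_le_max: "0 \<le> t \<Longrightarrow> t \<le> 1 \<Longrightarrow> (1-t) * a + t * b \<le> max a b" for a b t :: real
proof -
  assume t: "0 \<le> t" "t \<le> 1"
  have "(1-t) * a \<le> (1-t) * max a b" using t by (intro mult_left_mono) auto
  moreover have "t * b \<le> t * max a b" using t by (intro mult_left_mono) auto
  ultimately have "(1-t) * a + t * b \<le> (1-t) * max a b + t * max a b" by linarith
  thus ?thesis by (simp add: algebra_simps)
qed

context
  fixes P :: "'x::finite \<Rightarrow> real" and W :: "'x \<Rightarrow> 'y::finite \<Rightarrow> real"
  assumes P: "is_dist P" and Wc: "is_channel W"
begin

lemma cmi_lower:
  assumes l: "1 < l" and Q: "Q \<in> Kset P W"
  shows "ereal (MI P Q - CD P Q W / ((l-1)/l)) \<le> csiszar_mi l P W"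
  unfolding cmi_Tsum[OF P Wc]
proof (rule INF_greatest)
  fix S :: "'y \<Rightarrow> real" assume "S \<in> {S. is_dist S}"
  hence Sd: "is_dist S" by simp
  have S0: "0 \<le> S y" for y using dist_nonneg[OF Sd] .
  show "ereal (MI P Q - CD P Q W / ((l-1)/l)) \<le> Tsum P W l S"
  proof (cases "\<exists>x y. 0 < P x \<and> 0 < W x y \<and> S y = 0")
    case True
    then obtain x y where "0 < P x" "0 < W x y" "S y = 0" by blast
    hence "Tsum P W l S = \<infinity>" by (intro Tsum_inf[OF P Wc l])
    thus ?thesis by simp
  next
    case False
    have Sp: "0 < S y" if "0 < P x" "0 < W x y" for x y
      using False that S0[of y] by (auto simp: less_le)
    have T: "Tsum P W l S = ereal (Fr P W S l)" by (rule Tsum_fin[OF P Wc l S0 Sp])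
    define r where "r = (l-1)/l"
    have r: "0 < r" using l by (simp add: r_def)
    have a: "- r * Fr P W S l \<le> CD P Q W - r * CD P Q (\<lambda>x. S)"
      unfolding r_def by (rule Phi_ge[OF P Wc Q S0 Sp l])
    have b: "r * MI P Q \<le> r * CD P Q (\<lambda>x. S)"
    proof (rule mult_left_mono)
      show "MI P Q \<le> CD P Q (\<lambda>x. S)" by (rule golden[OF P Wc Q Sd]) (auto intro: Sp)
    qed (rule less_imp_le[OF r])
    have a': "- (r * Fr P W S l) \<le> CD P Q W - r * CD P Q (\<lambda>x. S)" using a by simp
    have "r * (MI P Q - CD P Q W / r) = r * MI P Q - CD P Q W" using r by (simp add: algebra_simps)
    hence "r * (MI P Q - CD P Q W / r) \<le> r * Fr P W S l" using a' b by linarith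
    hence "MI P Q - CD P Q W / r \<le> Fr P W S l" using r by simp
    thus ?thesis unfolding T r_def by simp
  qed
qed

lemma weak_dual:
  assumes Qc: "is_channel Q" and l: "l \<in> {1..2}"
  shows "ereal ((l-1)/l) * (ereal R - csiszar_mi l P W)
    \<le> rel_ent (joint P Q) (joint P W) + ereal (1/2) * max 0 (ereal R - rel_ent (joint P Q) (prod_dist P (out_dist P Q)))"
proof (cases "Q \<in> Kset P W")
  case False
  show ?thesis unfolding f_notK[OF P Wc Qc False] by simp
next
  case QK: True
  have fr0: "0 \<le> CD P Q W + 1/2 * max 0 (R - MI P Q)" using CD_nonneg[OF P Wc QK] by simp
  show ?thesis
  proof (cases "l = 1")
    case True
    thus ?thesis unfolding f_K[OF P Wc QK] using fr0 by (simp add: zero_ereal_def[symmetric])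
  next
    case False
    hence l1: "1 < l" and l2: "l \<le> 2" using l by auto
    define r where "r = (l-1)/l"
    have r: "0 < r" "r \<le> 1/2" using l1 l2 by (auto simp: r_def field_simps)
    define c where "c = MI P Q - CD P Q W / r"
    have cm: "ereal c \<le> csiszar_mi l P W" unfolding c_def r_def by (rule cmi_lower[OF l1 QK])
    have "ereal R - csiszar_mi l P W \<le> ereal R - ereal c"
      by (rule ereal_minus_mono) (use cm in auto)
    hence "ereal r * (ereal R - csiszar_mi l P W) \<le> ereal r * (ereal R - ereal c)"
      by (rule ereal_mult_left_mono) (use r in simp)
    also have "\<dots> = ereal (r * R - r * MI P Q + CD P Q W)"
      unfolding c_def using r by (simp add: algebra_simps)
    also have "\<dots> \<le> ereal (CD P Q W + 1/2 * max 0 (R - MI P Q))"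
    proof -
      have "r * (R - MI P Q) \<le> 1/2 * max 0 (R - MI P Q)"
      proof (cases "0 \<le> R - MI P Q")
        case True
        have "(R - MI P Q) * (2 * r) \<le> (R - MI P Q) * 1" by (rule mult_left_mono) (use True r in auto)
        thus ?thesis using True by (simp add: algebra_simps)
      next
        case False
        have "r * (R - MI P Q) \<le> 0" by (rule mult_nonneg_nonpos) (use r False in auto)
        thus ?thesis using False by simp
      qed
      thus ?thesis by (simp add: algebra_simps)
    qed
    finally show ?thesis unfolding f_K[OF P Wc QK] r_def .
  qed
qed

end

context
  fixes P :: "'x::finite \<Rightarrow> real" and W :: "'x \<Rightarrow> 'y::finite \<Rightarrow> real"
  assumes P: "is_dist P" and Wc: "is_channel W"
begin

lemma existence:
  "\<exists>Q0\<in>Kset P W. \<exists>l0\<in>{1..2}.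
     ereal (CD P Q0 W + 1/2 * max 0 (R - MI P Q0)) \<le> ereal ((l0-1)/l0) * (ereal R - csiszar_mi l0 P W)"
proof -
  let ?A = "Af P W" and ?B = "Bf P W R"
  obtain Q0 where Q0: "Q0 \<in> Kset P W" and min: "\<forall>Q\<in>Kset P W. max (?A Q0) (?B Q0) \<le> max (?A Q) (?B Q)"
    using min_exists[OF P Wc, of R] by blast
  define v where "v = max (?A Q0) (?B Q0)"
  have AK: "?A Q = CD P Q W" if "Q \<in> Kset P W" for Q using Af_K[OF P Wc that] .
  have BK: "?B Q = CD P Q W + 1/2 * (R - MI P Q)" if "Q \<in> Kset P W" for Q using Bf_K[OF P Wc that] .
  have fv: "CD P Q0 W + 1/2 * max 0 (R - MI P Q0) = v"
    unfolding v_def AK[OF Q0] BK[OF Q0] by (simp add: max_def)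
  have conv: "convex {z::real\<times>real. \<exists>Q\<in>Kset P W. ?A Q - v \<le> fst z \<and> ?B Q - v \<le> snd z}"
  proof (rule convexI)
    fix z1 z2 :: "real \<times> real" and u w :: real
    assume z1: "z1 \<in> {z. \<exists>Q\<in>Kset P W. ?A Q - v \<le> fst z \<and> ?B Q - v \<le> snd z}"
      and z2: "z2 \<in> {z. \<exists>Q\<in>Kset P W. ?A Q - v \<le> fst z \<and> ?B Q - v \<le> snd z}"
      and u: "0 \<le> u" and w: "0 \<le> w" and uw: "u + w = 1"
    obtain Q1 where Q1: "Q1 \<in> Kset P W" "?A Q1 - v \<le> fst z1" "?B Q1 - v \<le> snd z1" using z1 by blast
    obtain Q2 where Q2: "Q2 \<in> Kset P W" "?A Q2 - v \<le> fst z2" "?B Q2 - v \<le> snd z2" using z2 by blast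
    have w1: "w \<le> 1" using u uw by simp
    have u1: "u = 1 - w" using uw by simp
    let ?Q = "mix w Q1 Q2"
    have QK: "?Q \<in> Kset P W" by (rule mix_K[OF P Wc Q1(1) Q2(1) w w1])
    have a: "?A ?Q \<le> (1-w) * ?A Q1 + w * ?A Q2" by (rule Af_conv[OF P Wc Q1(1) Q2(1) w w1])
    have b: "?B ?Q \<le> (1-w) * ?B Q1 + w * ?B Q2" by (rule Bf_conv[OF P Wc Q1(1) Q2(1) w w1])
    have a1: "(1-w) * (?A Q1 - v) \<le> (1-w) * fst z1" by (rule mult_left_mono) (use Q1 w1 in auto)
    have a2: "w * (?A Q2 - v) \<le> w * fst z2" by (rule mult_left_mono) (use Q2 w in auto)
    have b1: "(1-w) * (?B Q1 - v) \<le> (1-w) * snd z1" by (rule mult_left_mono) (use Q1 w1 in auto)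
    have b2: "w * (?B Q2 - v) \<le> w * snd z2" by (rule mult_left_mono) (use Q2 w in auto)
    have "?A ?Q - v \<le> fst (u *\<^sub>R z1 + w *\<^sub>R z2)"
      using a a1 a2 unfolding u1 by (simp add: algebra_simps)
    moreover have "?B ?Q - v \<le> snd (u *\<^sub>R z1 + w *\<^sub>R z2)"
      using b b1 b2 unfolding u1 by (simp add: algebra_simps)
    ultimately show "u *\<^sub>R z1 + w *\<^sub>R z2 \<in> {z. \<exists>Q\<in>Kset P W. ?A Q - v \<le> fst z \<and> ?B Q - v \<le> snd z}"
      using QK by blast
  qed
  obtain t where t: "t \<in> {0..1}" and sep: "\<forall>Q\<in>Kset P W. v \<le> (1-t) * ?A Q + t * ?B Q"
    using sep2[OF conv _ ] W_K[OF P Wc] min unfolding v_def by blast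
  have sepK: "v \<le> CD P Q W + (t/2) * (R - MI P Q)" if "Q \<in> Kset P W" for Q
  proof -
    have h: "v \<le> (1-t) * ?A Q + t * ?B Q" using sep that by blast
    have e: "(1-t) * ?A Q + t * ?B Q = CD P Q W + (t/2) * (R - MI P Q)"
      unfolding AK[OF that] BK[OF that] by (simp add: field_simps)
    show ?thesis using h unfolding e .
  qed
  show ?thesis
  proof (cases "t = 0")
    case True
    have "v \<le> CD P W W" using sepK[OF W_K[OF P Wc]] True by simp
    hence "v \<le> 0" using CD_WW[OF P Wc] by simp
    hence "ereal (CD P Q0 W + 1/2 * max 0 (R - MI P Q0)) \<le> ereal ((1-1)/1) * (ereal R - csiszar_mi 1 P W)"
      unfolding fv by (simp add: zero_ereal_def[symmetric])
    thus ?thesis using Q0 by force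
  next
    case False
    hence t0: "0 < t" and t1: "t \<le> 1" using t by auto
    define r where "r = t / 2"
    define l where "l = 2 / (2 - t)"
    have l1: "1 < l" and l2: "l \<le> 2" using t0 t1 by (auto simp: l_def field_simps)
    have rl: "(l-1)/l = r" using t0 t1 unfolding l_def r_def by (simp add: field_simps)
    have r: "0 < r" "r \<le> 1" using t0 t1 by (auto simp: r_def)
    have cmb: "(1-t) * ?A Q0 + t * ?B Q0 \<le> v" unfolding v_def by (rule comb_le_max) (use t in auto)
    have minr: "CD P Q0 W - r * MI P Q0 \<le> CD P Q W - r * MI P Q" if QK: "Q \<in> Kset P W" for Q
    proof -
      have "CD P Q0 W + r * (R - MI P Q0) \<le> v"
        using cmb unfolding AK[OF Q0] BK[OF Q0] r_def by (simp add: algebra_simps)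
      moreover have "v \<le> CD P Q W + r * (R - MI P Q)" using sepK[OF QK] unfolding r_def by simp
      ultimately show ?thesis by (simp add: algebra_simps)
    qed
    define S where "S = out_dist P Q0"
    have Q0c: "is_channel Q0" using K_chan[OF P Wc Q0] .
    have Sd: "is_dist S" unfolding S_def by (rule out_dist_is_dist[OF P Q0c])
    have S0: "0 \<le> S y" for y using dist_nonneg[OF Sd] .
    have Sp: "0 < S y" if "0 < P x" "0 < W x y" for x y
      unfolding S_def by (rule pos_out[OF P Wc r Q0 minr that])
    have to: "CD P Q0 W - r * MI P Q0 \<le> - r * Fr P W S l"
      using tilt_opt[OF P Wc l1 Q0] minr unfolding rl S_def by blast
    have vle: "v \<le> r * (R - Fr P W S l)"
      using sepK[OF Q0] to unfolding r_def by (simp add: field_simps)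
    have cm: "csiszar_mi l P W \<le> ereal (Fr P W S l)"
    proof -
      have "csiszar_mi l P W \<le> Tsum P W l S" unfolding cmi_Tsum[OF P Wc]
        by (rule INF_lower) (use Sd in simp)
      also have "\<dots> = ereal (Fr P W S l)" by (rule Tsum_fin[OF P Wc l1 S0]) (auto intro: Sp)
      finally show ?thesis .
    qed
    have "ereal v \<le> ereal r * (ereal R - ereal (Fr P W S l))" using vle by simp
    also have "\<dots> \<le> ereal r * (ereal R - csiszar_mi l P W)"
    proof (rule ereal_mult_left_mono)
      show "ereal R - ereal (Fr P W S l) \<le> ereal R - csiszar_mi l P W"
        by (rule ereal_minus_mono) (use cm in auto)
    qed (use r in simp)
    finally have "ereal (CD P Q0 W + 1/2 * max 0 (R - MI P Q0)) \<le> ereal ((l-1)/l) * (ereal R - csiszar_mi l P W)"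
      unfolding fv rl .
    thus ?thesis using Q0 l1 l2 by force
  qed
qed

end

theorem proposition2:
  fixes P :: "'x::finite \<Rightarrow> real" and W :: "'x \<Rightarrow> 'y::finite \<Rightarrow> real"
    and m :: nat and R :: real
  assumes "m > 0" and "is_mtype m P" and "is_channel W"
    and "ereal R > mutual_info P W"
  shows "\<exists>Q0 l0. is_channel Q0 \<and> l0 \<in> {1..2} \<and>
    (let f = (\<lambda>Q. rel_ent (joint P Q) (joint P W)
                 + ereal (1/2) * max 0 (ereal R - rel_ent (joint P Q) (prod_dist P (out_dist P Q))));
         g = (\<lambda>l. ereal ((l - 1) / l) * (ereal R - csiszar_mi l P W))
     in f Q0 = g l0 \<and> (\<forall>Q. is_channel Q \<longrightarrow> f Q0 \<le> f Q)
        \<and> (\<forall>l\<in>{1..2}. g l \<le> g l0))"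
proof -
  have P: "is_dist P" using assms(2) by (simp add: is_mtype_def)
  have Wc: "is_channel W" by (rule assms(3))
  define f where "f = (\<lambda>Q. rel_ent (joint P Q) (joint P W)
                 + ereal (1/2) * max 0 (ereal R - rel_ent (joint P Q) (prod_dist P (out_dist P Q))))"
  define g where "g = (\<lambda>l. ereal ((l - 1) / l) * (ereal R - csiszar_mi l P W))"
  obtain Q0 l0 where Q0: "Q0 \<in> Kset P W" and l0: "l0 \<in> {1..2}"
    and le: "ereal (CD P Q0 W + 1/2 * max 0 (R - MI P Q0)) \<le> ereal ((l0-1)/l0) * (ereal R - csiszar_mi l0 P W)"
    using existence[OF P Wc, of R] by blast
  have Q0c: "is_channel Q0" using K_chan[OF P Wc Q0] .
  have fQ0: "f Q0 = ereal (CD P Q0 W + 1/2 * max 0 (R - MI P Q0))"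
    unfolding f_def by (rule f_K[OF P Wc Q0])
  have wd: "g l \<le> f Q" if "is_channel Q" "l \<in> {1..2}" for Q l
    unfolding f_def g_def by (rule weak_dual[OF P Wc that])
  have eq: "f Q0 = g l0"
  proof (rule antisym)
    show "f Q0 \<le> g l0" unfolding fQ0 g_def by (rule le)
    show "g l0 \<le> f Q0" by (rule wd[OF Q0c l0])
  qed
  have "f Q0 = g l0 \<and> (\<forall>Q. is_channel Q \<longrightarrow> f Q0 \<le> f Q) \<and> (\<forall>l\<in>{1..2}. g l \<le> g l0)"
  proof (intro conjI allI ballI impI)
    show "f Q0 = g l0" by (rule eq)
    fix Q :: "'x \<Rightarrow> 'y \<Rightarrow> real" assume "is_channel Q"
    thus "f Q0 \<le> f Q" using wd[OF _ l0] eq by metis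
  next
    fix l :: real assume "l \<in> {1..2}"
    thus "g l \<le> g l0" using wd[OF Q0c] eq by metis
  qed
  thus ?thesis using Q0c l0 unfolding Let_def f_def g_def by blast
qed

end
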